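(* Let $m_\ell=(i_\ell,k_\ell,\nu_\ell)$, $\ell=1,2,3$, with $i_\ell\in\{1,\ldots,N\}$, $k_\ell\in\{1,\ldots,n\}$, $\nu_\ell\in\{1,2\}$, and let $r>0$. Write $\psi^{-1}(\leq r)=\{p\in\mathbb{R}^{nN}\mid\psi(p)\leq r\}$. (a) (i) $X_{m_1}$ is of class $C^1$ on $\mathbb{R}^{nN}$ and bounded by a multiple of $\psi$ on $\psi^{-1}(\leq r)$; (ii) $(\mathrm{D}X_{m_1})X_{m_2}$ is continuous on $\mathbb{R}^{nN}$ and bounded by a multiple of $\psi^{3/2}$ on $\psi^{-1}(\leq r)$. (b) (i) $X_{m_1}\psi$ is of class $C^2$ on $\mathbb{R}^{nN}$ and bounded by a multiple of $\psi^{3/2}$ on $\psi^{-1}(\leq r)$; (ii) $X_{m_2}(X_{m_1}\psi)$ is of class $C^1$ and bounded by a multiple of $\psi^2$ on $\psi^{-1}(\leq r)$; (iii) $X_{m_3}(X_{m_2}(X_{m_1}\psi))$ is continuous and bounded by a multiple of $\psi^{5/2}$ on $\psi^{-1}(\leq r)$.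
   Context: $G=(V,E)$ is an undirected graph with $V=\{1,\ldots,N\}$ and nonempty edge set $E$ of two-element subsets (edges $ij$); $d_{ij}\geq0$ for $ij\in E$. For $p=(p_1,\ldots,p_N)\in\mathbb{R}^{nN}$: $\psi_i(p)=\frac14\sum_{j:\,ij\in E}(\|p_j-p_i\|^2-d_{ij}^2)^2$ and $\psi(p)=\frac14\sum_{ij\in E}(\|p_j-p_i\|^2-d_{ij}^2)^2$. For each $i$, $b_{i,1},\ldots,b_{i,n}$ is an orthonormal basis of $\mathbb{R}^n$; $B_{i,k}$ is the constant vector field on $\mathbb{R}^{nN}$ with $i$-th block $b_{i,k}$ and other blocks $0$. $X_m(p):=h_\nu(\psi_i(p))B_{i,k}(p)$ for $m=(i,k,\nu)$; $Xf(p)=\mathrm{D}f(p)X(p)$ denotes the Lie derivative of $f$ along $X$. The functions $h_1,h_2:\mathbb{R}\to\mathbb{R}$ satisfy, for $\nu=1,2$: (i) $h_\nu(y)=0$ for $y\leq 0$; (ii) $h_\nu$ is bounded and of class $C^2$ on $(0,\infty)$; (iii) $h_\nu(y)/y$ remains bounded as $y\downarrow 0$; (iv) $h_\nu'(y)$ remains bounded as $y\downarrow0$; (v) $h_\nu''(y)\,y$ remains bounded as $y\downarrow 0$; (vi) there exist $r',c'>0$ with $h_2'(y)h_1(y)-h_1'(y)h_2(y)\leq -c'y$ for all $y\in(0,r']$. A function $f$ (resp. vector field $X$) is bounded by a multiple of a nonnegative $b$ on $W$ if there is $c>0$ with $|f(x)|\leq c\,b(x)$ (resp. $\|X(x)\|\leq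 c\,b(x)$) for all $x\in W$. *)

theory Defs
  imports "HOL-Analysis.Analysis"
begin

definition C1 :: "('a::real_normed_vector \<Rightarrow> 'b::real_normed_vector) \<Rightarrow> bool" where
  "C1 f \<longleftrightarrow> (\<exists>f'. (\<forall>x. (f has_derivative blinfun_apply (f' x)) (at x)) \<and> continuous_on UNIV f')"

definition C2 :: "('a::real_normed_vector \<Rightarrow> 'b::real_normed_vector) \<Rightarrow> bool" where
  "C2 f \<longleftrightarrow> (\<exists>f'. (\<forall>x. (f has_derivative blinfun_apply (f' x)) (at x)) \<and> C1 f')"

text \<open>Configurations p in R^(nN): the block of vertex i is p $ i :: real^'n.\<close>

definition edge_term :: "('v set \<Rightarrow> real) \<Rightarrow> real^'n^'v \<Rightarrow> 'v set \<Rightarrow> real" where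
  "edge_term d p e =
     (let i = (SOME i. i \<in> e); j = (SOME j. j \<in> e \<and> j \<noteq> i)
      in ((norm (p $ j - p $ i))\<^sup>2 - (d e)\<^sup>2)\<^sup>2)"

definition psi :: "'v set set \<Rightarrow> ('v set \<Rightarrow> real) \<Rightarrow> real^'n^'v \<Rightarrow> real" where
  "psi E d p = 1/4 * (\<Sum>e\<in>E. edge_term d p e)"

definition psi_i :: "'v set set \<Rightarrow> ('v set \<Rightarrow> real) \<Rightarrow> 'v \<Rightarrow> real^'n^'v \<Rightarrow> real" where
  "psi_i E d i p = 1/4 * (\<Sum>j\<in>{j. {i, j} \<in> E}. ((norm (p $ j - p $ i))\<^sup>2 - (d {i, j})\<^sup>2)\<^sup>2)"

definition Bfield :: "('v \<Rightarrow> 'n \<Rightarrow> real^'n) \<Rightarrow> 'v \<Rightarrow> 'n \<Rightarrow> real^'n^'v" where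
  "Bfield b i k = (\<chi> j. if j = i then b i k else 0)"

definition Xfield :: "'v set set \<Rightarrow> ('v set \<Rightarrow> real) \<Rightarrow> ('v \<Rightarrow> 'n \<Rightarrow> real^'n) \<Rightarrow>
    (nat \<Rightarrow> real \<Rightarrow> real) \<Rightarrow> 'v \<times> 'n \<times> nat \<Rightarrow> real^'n^'v \<Rightarrow> real^'n^'v" where
  "Xfield E d b h m p = (case m of (i, k, \<nu>) \<Rightarrow> h \<nu> (psi_i E d i p) *\<^sub>R Bfield b i k)"

definition lie :: "('a::real_normed_vector \<Rightarrow> 'a) \<Rightarrow> ('a \<Rightarrow> 'b::real_normed_vector) \<Rightarrow> 'a \<Rightarrow> 'b" where
  "lie X f p = frechet_derivative f (at p) (X p)"

definition admissible_h :: "(real \<Rightarrow> real) \<Rightarrow> bool" where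
  "admissible_h g \<longleftrightarrow>
     (\<forall>y\<le>0. g y = 0) \<and>
     bounded (range g) \<and>
     (\<forall>y>0. g field_differentiable (at y) \<and> deriv g field_differentiable (at y)) \<and>
     continuous_on {0<..} (deriv (deriv g)) \<and>
     Bfun (\<lambda>y. g y / y) (at_right 0) \<and>
     Bfun (deriv g) (at_right 0) \<and>
     Bfun (\<lambda>y. deriv (deriv g) y * y) (at_right 0)"

end

theory Submission
  imports Defs
begin


lemma C1I:
  fixes f :: "'a::euclidean_space \<Rightarrow> 'b::real_normed_vector"
  assumes d: "\<And>x. (f has_derivative D x) (at x)"
    and c: "\<And>i. i \<in> Basis \<Longrightarrow> continuous_on UNIV (\<lambda>x. D x i)"
  shows "C1 f"
proof -
  have bl: "\<And>x. bounded_linear (D x)" using d has_derivative_bounded_linear by blast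
  show ?thesis unfolding C1_def
  proof (intro exI[of _ "\<lambda>x. Blinfun (D x)"] conjI allI)
    fix x show "(f has_derivative blinfun_apply (Blinfun (D x))) (at x)"
      using d bl by (simp add: bounded_linear_Blinfun_apply)
  next
    show "continuous_on UNIV (\<lambda>x. Blinfun (D x))"
      by (rule continuous_on_blinfun_componentwise) (use c bl in \<open>simp add: bounded_linear_Blinfun_apply\<close>)
  qed
qed

lemma C2I:
  fixes f :: "'a::euclidean_space \<Rightarrow> real"
  assumes d: "\<And>x. (f has_derivative D x) (at x)"
    and dd: "\<And>i x. i \<in> Basis \<Longrightarrow> ((\<lambda>x. D x i) has_derivative DD x i) (at x)"
    and c: "\<And>i j. i \<in> Basis \<Longrightarrow> j \<in> Basis \<Longrightarrow> continuous_on UNIV (\<lambda>x. DD x i j)"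
  shows "C2 f"
proof -
  have bl: "\<And>x. bounded_linear (D x)" using d has_derivative_bounded_linear by blast
  have bl2: "\<And>x i. i \<in> Basis \<Longrightarrow> bounded_linear (DD x i)" using dd has_derivative_bounded_linear by blast
  have rep: "Blinfun (D x) = (\<Sum>i\<in>Basis. D x i *\<^sub>R blinfun_inner_left i)" for x
  proof (rule blinfun_eqI)
    fix v
    have "D x v = D x (\<Sum>i\<in>Basis. (v \<bullet> i) *\<^sub>R i)" by (simp add: euclidean_representation)
    also have "\<dots> = (\<Sum>i\<in>Basis. (v \<bullet> i) * D x i)"
      using bl[of x] by (simp add: linear_sum linear_scale bounded_linear.linear)
    finally show "blinfun_apply (Blinfun (D x)) v = blinfun_apply (\<Sum>i\<in>Basis. D x i *\<^sub>R blinfun_inner_left i) v"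
      using bl by (simp add: bounded_linear_Blinfun_apply blinfun.sum_left mult.commute blinfun.scaleR_left)
  qed
  show ?thesis unfolding C2_def
  proof (intro exI[of _ "\<lambda>x. Blinfun (D x)"] conjI allI)
    fix x show "(f has_derivative blinfun_apply (Blinfun (D x))) (at x)"
      using d bl by (simp add: bounded_linear_Blinfun_apply)
  next
    show "C1 (\<lambda>x. Blinfun (D x))"
      unfolding rep
    proof (rule C1I[where D="\<lambda>x v. \<Sum>i\<in>Basis. DD x i v *\<^sub>R blinfun_inner_left i"])
      fix x
      show "((\<lambda>x. \<Sum>i\<in>Basis. D x i *\<^sub>R blinfun_inner_left i) has_derivative
          (\<lambda>v. \<Sum>i\<in>Basis. DD x i v *\<^sub>R blinfun_inner_left i)) (at x)"
        by (intro has_derivative_sum has_derivative_scaleR_left dd)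
    next
      fix j :: 'a assume j: "j \<in> Basis"
      show "continuous_on UNIV (\<lambda>x. \<Sum>i\<in>Basis. DD x i j *\<^sub>R blinfun_inner_left i)"
        by (intro continuous_intros continuous_on_scaleR c j) 
    qed
  qed
qed



type_synonym ('n,'v) cfg = "real^'n^'v"

inductive polyE :: "'v set set \<Rightarrow> (real^'n^'v \<Rightarrow> real) \<Rightarrow> bool" for E where
  cst: "polyE E (\<lambda>p. c)"
| atom: "{i,j} \<in> E \<Longrightarrow> polyE E (\<lambda>p. (p$j - p$i) \<bullet> c)"
| add: "polyE E f \<Longrightarrow> polyE E g \<Longrightarrow> polyE E (\<lambda>p. f p + g p)"
| mul: "polyE E f \<Longrightarrow> polyE E g \<Longrightarrow> polyE E (\<lambda>p. f p * g p)"

definition Dd :: "('a::real_normed_vector \<Rightarrow> 'b::real_normed_vector) \<Rightarrow> 'a \<Rightarrow> 'a \<Rightarrow> 'b" where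
  "Dd f v p = frechet_derivative f (at p) v"

lemma Dd_eq: "(f has_derivative f') (at p) \<Longrightarrow> Dd f v p = f' v"
  unfolding Dd_def by (metis frechet_derivative_at)

lemma Dd_has: "(f has_derivative f') (at p) \<Longrightarrow> (f has_derivative (\<lambda>v. Dd f v p)) (at p)"
  unfolding Dd_def by (metis frechet_derivative_at)

lemma polyE_deriv_ex:
  "polyE E f \<Longrightarrow> \<exists>f'. (\<forall>p. (f has_derivative f' p) (at p)) \<and> (\<forall>v. polyE E (\<lambda>p. f' p v))"
proof (induction rule: polyE.induct)
  case (cst c)
  then show ?case by (intro exI[of _ "\<lambda>p v. 0"]) (auto intro: polyE.cst)
next
  case (atom i j c)
  have "bounded_linear (\<lambda>p. (p$j - p$i) \<bullet> c)"
    by (intro bounded_linear_intros bounded_linear_vec_nth)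
  then have "((\<lambda>p. (p$j - p$i) \<bullet> c) has_derivative (\<lambda>p. (p$j - p$i) \<bullet> c)) (at p)" for p
    by (rule bounded_linear_imp_has_derivative)
  then show ?case by (intro exI[of _ "\<lambda>p v. (v$j - v$i) \<bullet> c"]) (auto intro: polyE.cst)
next
  case (add f g)
  then obtain f' g' where "\<forall>p. (f has_derivative f' p) (at p)" "\<forall>v. polyE E (\<lambda>p. f' p v)"
    "\<forall>p. (g has_derivative g' p) (at p)" "\<forall>v. polyE E (\<lambda>p. g' p v)" by blast
  then show ?case
    by (intro exI[of _ "\<lambda>p v. f' p v + g' p v"]) (auto intro: polyE.add has_derivative_add)
next
  case (mul f g)
  then obtain f' g' where "\<forall>p. (f has_derivative f' p) (at p)" "\<forall>v. polyE E (\<lambda>p. f' p v)"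
    "\<forall>p. (g has_derivative g' p) (at p)" "\<forall>v. polyE E (\<lambda>p. g' p v)" by blast
  with mul.hyps show ?case
    by (intro exI[of _ "\<lambda>p v. f p * g' p v + f' p v * g p"])
       (auto intro!: polyE.add polyE.mul has_derivative_mult)
qed

lemma polyE_has_deriv: "polyE E f \<Longrightarrow> (f has_derivative (\<lambda>v. Dd f v p)) (at p)"
  using polyE_deriv_ex Dd_has by metis

lemma polyE_Dd: "polyE E f \<Longrightarrow> polyE E (\<lambda>p. Dd f v p)"
proof -
  assume f: "polyE E f"
  then obtain f' where "\<forall>p. (f has_derivative f' p) (at p)" "\<forall>v. polyE E (\<lambda>p. f' p v)"
    using polyE_deriv_ex by blast
  then show ?thesis using Dd_eq by (metis (no_types, lifting) ext)
qed

lemma polyE_cont: "polyE E f \<Longrightarrow> continuous_on UNIV f"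
  by (induction rule: polyE.induct) (auto intro!: continuous_intros)

lemma polyE_isCont: "polyE E f \<Longrightarrow> isCont f p"
  using polyE_cont continuous_on_eq_continuous_at open_UNIV by blast

definition RM :: "'v set set \<Rightarrow> real \<Rightarrow> (real^'n^'v) set" where
  "RM E M = {p. \<forall>i j. {i,j} \<in> E \<longrightarrow> norm (p$j - p$i) \<le> M}"

lemma polyE_bounded: "polyE E f \<Longrightarrow> \<exists>C. \<forall>p\<in>RM E M. \<bar>f p\<bar> \<le> C"
proof (induction rule: polyE.induct)
  case (cst c) then show ?case by auto
next
  case (atom i j c)
  have "\<bar>(p$j - p$i) \<bullet> c\<bar> \<le> M * norm c" if "p \<in> RM E M" for p
  proof -
    have "\<bar>(p$j - p$i) \<bullet> c\<bar> \<le> norm (p$j - p$i) * norm c" by (rule Cauchy_Schwarz_ineq2)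
    also have "\<dots> \<le> M * norm c" using that atom unfolding RM_def by (auto intro: mult_right_mono)
    finally show ?thesis .
  qed
  then show ?case by blast
next
  case (add f g)
  then obtain C1 C2 where "\<forall>p\<in>RM E M. \<bar>f p\<bar> \<le> C1" "\<forall>p\<in>RM E M. \<bar>g p\<bar> \<le> C2" by blast
  then show ?case by (intro exI[of _ "C1 + C2"]) (auto intro!: order_trans[OF abs_triangle_ineq] add_mono)
next
  case (mul f g)
  then obtain C1 C2 where "\<forall>p\<in>RM E M. \<bar>f p\<bar> \<le> C1" "\<forall>p\<in>RM E M. \<bar>g p\<bar> \<le> C2" by blast
  then show ?case by (intro exI[of _ "C1 * C2"]) (auto simp: abs_mult intro!: mult_mono order_trans[OF abs_ge_zero])
qed

lemma RM_local: fixes p :: "real^'n^'v" shows "\<exists>M. p \<in> RM E M \<and> (\<forall>\<^sub>F q in at p. q \<in> RM E M)"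
proof -
  define M where "M = (\<Sum>ij\<in>UNIV. norm (p$snd ij - p$fst ij)) + 1"
  have le: "norm (p$j - p$i) \<le> M - 1" for i j
    unfolding M_def using member_le_sum[of "(i,j)" UNIV "\<lambda>ij. norm (p$snd ij - p$fst ij)"] by auto
  have ev: "\<forall>\<^sub>F q in at p. \<forall>ij. norm (q$snd ij - q$fst ij) < norm (p$snd ij - p$fst ij) + 1"
  proof (rule eventually_all_finite)
    fix ij
    have "((\<lambda>q. norm (q$snd ij - q$fst ij)) \<longlongrightarrow> norm (p$snd ij - p$fst ij)) (at p)"
      by (intro tendsto_intros)
    then show "\<forall>\<^sub>F q in at p. norm (q$snd ij - q$fst ij) < norm (p$snd ij - p$fst ij) + 1"
      by (rule order_tendstoD) simp
  qed
  have "\<forall>\<^sub>F q in at p. q \<in> RM E M"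
  proof (rule eventually_mono[OF ev])
    fix q :: "real^'n^'v" assume a: "\<forall>ij. norm (q$snd ij - q$fst ij) < norm (p$snd ij - p$fst ij) + 1"
    show "q \<in> RM E M" unfolding RM_def
    proof (intro CollectI allI impI)
      fix i j
      have "norm (q$j - q$i) < norm (p$j - p$i) + 1" using a[rule_format, of "(i,j)"] by simp
      then show "norm (q$j - q$i) \<le> M" using le[of j i] by simp
    qed
  qed
  moreover have "p \<in> RM E M" unfolding RM_def
  proof (intro CollectI allI impI)
    fix i j show "norm (p$j - p$i) \<le> M" using le[of j i] by simp
  qed
  ultimately show ?thesis by blast
qed



lemma bfun_cont_bound:
  fixes k :: "real \<Rightarrow> real"
  assumes bf: "Bfun k (at_right 0)" and c: "continuous_on {0<..} k"
  shows "\<exists>K. \<forall>y. 0 < y \<and> y \<le> R \<longrightarrow> \<bar>k y\<bar> \<le> K"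
proof -
  obtain K0 where K0: "K0 > 0" "eventually (\<lambda>y. norm (k y) \<le> K0) (at_right 0)"
    using bf unfolding Bfun_def by blast
  then obtain b where b: "b > 0" "\<And>y. y > 0 \<Longrightarrow> y < b \<Longrightarrow> \<bar>k y\<bar> \<le> K0"
    unfolding eventually_at_right_field by auto
  have "compact (k ` {b/2..R})"
    by (rule compact_continuous_image) (use b in \<open>auto intro: continuous_on_subset[OF c]\<close>)
  then obtain K1 where K1: "\<forall>x\<in>k ` {b/2..R}. \<bar>x\<bar> \<le> K1"
    using compact_imp_bounded bounded_real by metis
  show ?thesis
  proof (intro exI[of _ "max K0 K1"] allI impI)
    fix y assume y: "0 < y \<and> y \<le> R"
    show "\<bar>k y\<bar> \<le> max K0 K1"
    proof (cases "y < b")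
      case True then show ?thesis using b y by force
    next
      case False then show ?thesis using K1 y b by force
    qed
  qed
qed

locale adm =
  fixes g :: "real \<Rightarrow> real"
  assumes adm: "admissible_h g"
begin

lemma zero: "y \<le> 0 \<Longrightarrow> g y = 0"
  using adm unfolding admissible_h_def by auto

lemma d1: "y > 0 \<Longrightarrow> (g has_real_derivative deriv g y) (at y)"
  using adm unfolding admissible_h_def by (auto simp: DERIV_deriv_iff_field_differentiable)

lemma d2: "y > 0 \<Longrightarrow> (deriv g has_real_derivative deriv (deriv g) y) (at y)"
  using adm unfolding admissible_h_def by (auto simp: DERIV_deriv_iff_field_differentiable)

lemma c2: "continuous_on {0<..} (deriv (deriv g))"
  using adm unfolding admissible_h_def by auto

lemma c1: "continuous_on {0<..} (deriv g)"
proof -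
  have "\<forall>y\<in>{0<..}. isCont (deriv g) y" using d2 DERIV_isCont by auto
  then show ?thesis by (simp add: continuous_at_imp_continuous_on)
qed

lemma c0: "continuous_on {0<..} g"
proof -
  have "\<forall>y\<in>{0<..}. isCont g y" using d1 DERIV_isCont by auto
  then show ?thesis by (simp add: continuous_at_imp_continuous_on)
qed

lemma b0: "\<exists>K. \<forall>y. 0 < y \<and> y \<le> R \<longrightarrow> \<bar>g y\<bar> \<le> K * y"
proof -
  have "\<exists>K. \<forall>y. 0 < y \<and> y \<le> R \<longrightarrow> \<bar>g y / y\<bar> \<le> K"
    by (rule bfun_cont_bound) (use adm c0 in \<open>auto simp: admissible_h_def intro!: continuous_intros\<close>)
  then obtain K where "\<forall>y. 0 < y \<and> y \<le> R \<longrightarrow> \<bar>g y / y\<bar> \<le> K" by blast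
  then have "\<forall>y. 0 < y \<and> y \<le> R \<longrightarrow> \<bar>g y\<bar> \<le> K * y"
    by (auto simp: abs_divide divide_le_eq)
  then show ?thesis by blast
qed

lemma b1: "\<exists>K. \<forall>y. 0 < y \<and> y \<le> R \<longrightarrow> \<bar>deriv g y\<bar> \<le> K"
  by (rule bfun_cont_bound) (use adm c1 in \<open>auto simp: admissible_h_def\<close>)

lemma b2: "\<exists>K. \<forall>y. 0 < y \<and> y \<le> R \<longrightarrow> \<bar>deriv (deriv g) y\<bar> * y \<le> K"
proof -
  have "\<exists>K. \<forall>y. 0 < y \<and> y \<le> R \<longrightarrow> \<bar>deriv (deriv g) y * y\<bar> \<le> K"
    by (rule bfun_cont_bound) (use adm c2 in \<open>auto simp: admissible_h_def intro!: continuous_intros\<close>)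
  then show ?thesis by (auto simp: abs_mult)
qed

lemma cont: "isCont g y"
proof (cases "y > 0")
  case True then show ?thesis using d1 DERIV_isCont by blast
next
  case False
  show ?thesis
  proof (cases "y < 0")
    case True
    have "\<forall>\<^sub>F z in nhds y. z < 0" using eventually_nhds_in_open[of "{..<0}" y] True by simp
    then have "\<forall>\<^sub>F z in nhds y. g z = 0" by eventually_elim (simp add: zero)
    then have "\<forall>\<^sub>F z in at y. g z = 0" by (simp add: eventually_at_filter eventually_mono)
    then have "(g \<longlongrightarrow> 0) (at y)" by (rule tendsto_eventually)
    then show ?thesis using True zero[of y] by (simp add: isCont_def)
  next
    case False2: False
    then have y0: "y = 0" using False by simp
    obtain K where K: "\<forall>z. 0 < z \<and> z \<le> 1 \<longrightarrow> \<bar>g z\<bar> \<le> K * z" using b0 by blast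
    have "((\<lambda>z. \<bar>z\<bar>) \<longlongrightarrow> \<bar>0::real\<bar>) (at 0)" by (intro tendsto_intros)
    then have "\<forall>\<^sub>F z in at 0. \<bar>z::real\<bar> < 1" by (rule order_tendstoD) simp
    then have ev: "\<forall>\<^sub>F z in at 0. norm (g z) \<le> \<bar>K\<bar> * \<bar>z\<bar>"
    proof eventually_elim
      case (elim z)
      show ?case
      proof (cases "z > 0")
        case True then have "\<bar>g z\<bar> \<le> K * z" using K elim by auto
        also have "\<dots> \<le> \<bar>K\<bar> * \<bar>z\<bar>" by (simp add: abs_mult[symmetric])
        finally show ?thesis by simp
      next
        case False then have "g z = 0" using zero by simp
        then show ?thesis by simp
      qed
    qed
    have "((\<lambda>z. \<bar>K\<bar> * \<bar>z\<bar>) \<longlongrightarrow> 0) (at 0)" by (auto intro!: tendsto_eq_intros)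
    then have "(g \<longlongrightarrow> 0) (at 0)" by (rule Lim_null_comparison[OF ev])
    then show ?thesis using y0 zero[of 0] by (simp add: isCont_def)
  qed
qed

end



lemma deriv_zero_mult:
  fixes a w :: "'a::real_normed_vector \<Rightarrow> real"
  assumes a: "\<forall>\<^sub>F q in at p. \<bar>a q\<bar> \<le> K" and w: "(w has_derivative (\<lambda>v. 0)) (at p)" and w0: "w p = 0"
  shows "((\<lambda>q. a q * w q) has_derivative (\<lambda>v. 0)) (at p)"
proof -
  have "((\<lambda>y. norm (w y - w p - 0) / norm (y - p)) \<longlongrightarrow> 0) (at p)"
    using w unfolding has_derivative_iff_norm by simp
  then have l0: "((\<lambda>y. norm (w y) / norm (y - p)) \<longlongrightarrow> 0) (at p)"
    using w0 by simp
  have l: "((\<lambda>y. \<bar>K\<bar> * (norm (w y) / norm (y - p))) \<longlongrightarrow> 0) (at p)"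
    by (rule tendsto_mult_right_zero[OF l0])
  have "((\<lambda>y. norm (a y * w y - a p * w p - 0) / norm (y - p)) \<longlongrightarrow> 0) (at p)"
  proof (rule Lim_null_comparison[OF _ l])
    show "\<forall>\<^sub>F y in at p. norm (norm (a y * w y - a p * w p - 0) / norm (y - p)) \<le> \<bar>K\<bar> * (norm (w y) / norm (y - p))"
      using a
    proof eventually_elim
      case (elim y)
      have "\<bar>a y\<bar> * \<bar>w y\<bar> \<le> \<bar>K\<bar> * \<bar>w y\<bar>" using elim by (intro mult_right_mono) auto
      then show ?case using w0 by (simp add: abs_mult divide_right_mono)
    qed
  qed
  then show ?thesis unfolding has_derivative_iff_norm by simp
qed

lemma tendsto_bdd_zero:
  fixes a w :: "'a::topological_space \<Rightarrow> real"
  assumes a: "\<forall>\<^sub>F q in F. \<bar>a q\<bar> \<le> K" and w: "(w \<longlongrightarrow> 0) F"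
  shows "((\<lambda>q. a q * w q) \<longlongrightarrow> 0) F"
proof -
  have l: "((\<lambda>y. \<bar>K\<bar> * \<bar>w y\<bar>) \<longlongrightarrow> 0) F" using w by (auto intro: tendsto_mult_right_zero tendsto_rabs_zero)
  show ?thesis
  proof (rule Lim_null_comparison[OF _ l])
    show "\<forall>\<^sub>F y in F. norm (a y * w y) \<le> \<bar>K\<bar> * \<bar>w y\<bar>"
      using a by eventually_elim (auto simp: abs_mult intro: mult_right_mono)
  qed
qed

lemma polyE_sum: "finite S \<Longrightarrow> (\<And>j. j \<in> S \<Longrightarrow> polyE E (f j)) \<Longrightarrow> polyE E (\<lambda>p. \<Sum>j\<in>S. f j p)"
  by (induction S rule: finite_induct) (auto intro: polyE.intros)

lemma polyE_minus: "polyE E f \<Longrightarrow> polyE E g \<Longrightarrow> polyE E (\<lambda>p. f p - g p)"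
proof -
  assume "polyE E f" "polyE E g"
  then have "polyE E (\<lambda>p. f p + (-1) * g p)" by (intro polyE.intros)
  then show ?thesis by simp
qed

lemma polyE_cmult: "polyE E f \<Longrightarrow> polyE E (\<lambda>p. c * f p)"
  by (intro polyE.intros)

lemma polyE_pow2: "polyE E f \<Longrightarrow> polyE E (\<lambda>p. (f p)\<^sup>2)"
  by (simp add: power2_eq_square polyE.intros)

lemma Dd_add: "polyE E f \<Longrightarrow> polyE E g \<Longrightarrow> Dd (\<lambda>p. f p + g p) v p = Dd f v p + Dd g v p"
  by (rule Dd_eq) (intro has_derivative_add polyE_has_deriv)

lemma Dd_mult: "polyE E f \<Longrightarrow> polyE E g \<Longrightarrow> Dd (\<lambda>p. f p * g p) v p = f p * Dd g v p + Dd f v p * g p"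
  by (rule Dd_eq) (intro has_derivative_mult polyE_has_deriv)

lemma Dd_cmult: "polyE E f \<Longrightarrow> Dd (\<lambda>p. c * f p) v p = c * Dd f v p"
  by (rule Dd_eq) (intro has_derivative_mult_right polyE_has_deriv)

lemma Dd_pow2: "polyE E f \<Longrightarrow> Dd (\<lambda>p. (f p)\<^sup>2) v p = 2 * f p * Dd f v p"
  using Dd_mult[of E f f v p] by (simp add: power2_eq_square)

lemma Dd_sum: "finite S \<Longrightarrow> (\<And>j. j \<in> S \<Longrightarrow> polyE E (f j)) \<Longrightarrow> Dd (\<lambda>p. \<Sum>j\<in>S. f j p) v p = (\<Sum>j\<in>S. Dd (f j) v p)"
  by (rule Dd_eq) (intro has_derivative_sum polyE_has_deriv, auto)

lemma Dd_linear: "polyE E f \<Longrightarrow> Dd f (c *\<^sub>R v) p = c * Dd f v p"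
proof -
  assume "polyE E f"
  then have "linear (\<lambda>v. Dd f v p)" using polyE_has_deriv has_derivative_linear by blast
  from linear_cmul[OF this, of c v] show ?thesis by simp
qed

definition sos :: "'v set set \<Rightarrow> 'j set \<Rightarrow> ('j \<Rightarrow> real^'n^'v \<Rightarrow> real) \<Rightarrow> (real^'n^'v \<Rightarrow> real) \<Rightarrow> bool" where
  "sos E J f \<phi> \<longleftrightarrow> finite J \<and> (\<forall>j\<in>J. polyE E (f j)) \<and> (\<forall>p. \<phi> p = 1/4 * (\<Sum>j\<in>J. (f j p)\<^sup>2))"

definition linf :: "'v set set \<Rightarrow> 'j set \<Rightarrow> ('j \<Rightarrow> real^'n^'v \<Rightarrow> real) \<Rightarrow> (real^'n^'v \<Rightarrow> real) \<Rightarrow> bool" where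
  "linf E J f w \<longleftrightarrow> (\<exists>k. (\<forall>j\<in>J. polyE E (k j)) \<and> (\<forall>p. w p = (\<Sum>j\<in>J. f j p * k j p)))"

context
  fixes E J f \<phi>
  assumes S: "sos E J f \<phi>"
begin

lemma sos_fin: "finite J" and sos_f: "j \<in> J \<Longrightarrow> polyE E (f j)" and sos_eq: "\<phi> p = 1/4 * (\<Sum>j\<in>J. (f j p)\<^sup>2)"
  using S unfolding sos_def by auto

lemma sos_fun: "\<phi> = (\<lambda>p. 1/4 * (\<Sum>j\<in>J. (f j p)\<^sup>2))"
  using sos_eq by auto

lemma sos_polyE: "polyE E \<phi>"
  unfolding sos_fun by (intro polyE_cmult polyE_sum polyE_pow2 sos_f sos_fin)

lemma sos_nonneg: "\<phi> p \<ge> 0"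
  unfolding sos_eq by (auto intro: sum_nonneg)

lemma sos_f_sq: "j \<in> J \<Longrightarrow> (f j p)\<^sup>2 \<le> 4 * \<phi> p"
  unfolding sos_eq using member_le_sum[of j J "\<lambda>j. (f j p)\<^sup>2"] sos_fin by auto

lemma sos_f_bound: "j \<in> J \<Longrightarrow> \<bar>f j p\<bar> \<le> 2 * sqrt (\<phi> p)"
proof -
  assume j: "j \<in> J"
  have "\<bar>f j p\<bar> = sqrt ((f j p)\<^sup>2)" by simp
  also have "\<dots> \<le> sqrt (4 * \<phi> p)" using sos_f_sq[OF j] by (rule real_sqrt_le_mono)
  also have "\<dots> = 2 * sqrt (\<phi> p)" by (simp add: real_sqrt_mult)
  finally show ?thesis .
qed

lemma sos_zero: "\<phi> p = 0 \<Longrightarrow> j \<in> J \<Longrightarrow> f j p = 0"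
  using sos_f_bound[of j p] by simp

lemma sos_Dd: "Dd \<phi> v p = (\<Sum>j\<in>J. f j p * (1/2 * Dd (f j) v p))"
proof -
  have "Dd \<phi> v p = 1/4 * (\<Sum>j\<in>J. 2 * f j p * Dd (f j) v p)"
  proof -
    have ps: "polyE E (\<lambda>p. \<Sum>j\<in>J. (f j p)\<^sup>2)" by (intro polyE_sum polyE_pow2 sos_f sos_fin)
    have "Dd \<phi> v p = 1/4 * Dd (\<lambda>p. \<Sum>j\<in>J. (f j p)\<^sup>2) v p"
      unfolding sos_fun by (rule Dd_cmult[OF ps])
    also have "Dd (\<lambda>p. \<Sum>j\<in>J. (f j p)\<^sup>2) v p = (\<Sum>j\<in>J. Dd (\<lambda>p. (f j p)\<^sup>2) v p)"
      by (rule Dd_sum) (auto intro: sos_fin polyE_pow2 sos_f)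
    also have "\<dots> = (\<Sum>j\<in>J. 2 * f j p * Dd (f j) v p)"
      by (rule sum.cong) (auto simp: Dd_pow2[OF sos_f])
    finally show ?thesis .
  qed
  then show ?thesis by (simp add: sum_distrib_left)
qed

lemma sos_Dd_linf: "linf E J f (\<lambda>p. Dd \<phi> v p)"
proof -
  have "\<forall>j\<in>J. polyE E (\<lambda>p. 1/2 * Dd (f j) v p)" by (intro ballI polyE_cmult polyE_Dd sos_f)
  then show ?thesis unfolding linf_def using sos_Dd
    by (intro exI[of _ "\<lambda>j p. 1/2 * Dd (f j) v p"]) auto
qed

lemma linf_polyE: "linf E J f w \<Longrightarrow> polyE E w"
proof -
  assume "linf E J f w"
  then obtain k where k: "\<forall>j\<in>J. polyE E (k j)" "\<forall>p. w p = (\<Sum>j\<in>J. f j p * k j p)"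
    unfolding linf_def by blast
  then have "w = (\<lambda>p. \<Sum>j\<in>J. f j p * k j p)" by auto
  then show ?thesis using k sos_f sos_fin by (auto intro!: polyE_sum polyE.mul)
qed

lemma linf_zero: "linf E J f w \<Longrightarrow> \<phi> p = 0 \<Longrightarrow> w p = 0"
  unfolding linf_def using sos_zero by auto

lemma linf_mult: "linf E J f w \<Longrightarrow> polyE E c \<Longrightarrow> linf E J f (\<lambda>p. w p * c p)"
proof -
  assume "linf E J f w" "polyE E c"
  then obtain k where k: "\<forall>j\<in>J. polyE E (k j)" "\<forall>p. w p = (\<Sum>j\<in>J. f j p * k j p)"
    unfolding linf_def by blast
  show ?thesis unfolding linf_def
    using k \<open>polyE E c\<close>
    by (intro exI[of _ "\<lambda>j p. k j p * c p"]) (auto intro: polyE.mul simp: sum_distrib_right mult.assoc)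
qed

lemma linf_bound: "linf E J f w \<Longrightarrow> \<exists>C. \<forall>p\<in>RM E M. \<bar>w p\<bar> \<le> C * sqrt (\<phi> p)"
proof -
  assume "linf E J f w"
  then obtain k where k: "\<forall>j\<in>J. polyE E (k j)" "\<forall>p. w p = (\<Sum>j\<in>J. f j p * k j p)"
    unfolding linf_def by blast
  have "\<forall>j\<in>J. \<exists>C. \<forall>p\<in>RM E M. \<bar>k j p\<bar> \<le> C" using k polyE_bounded by blast
  then obtain C where C: "\<forall>j\<in>J. \<forall>p\<in>RM E M. \<bar>k j p\<bar> \<le> C j" by metis
  have "\<bar>w p\<bar> \<le> (\<Sum>j\<in>J. 2 * \<bar>C j\<bar>) * sqrt (\<phi> p)" if p: "p \<in> RM E M" for p
  proof -
    have "\<bar>w p\<bar> \<le> (\<Sum>j\<in>J. \<bar>f j p * k j p\<bar>)" using k by (simp add: sum_abs)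
    also have "\<dots> \<le> (\<Sum>j\<in>J. 2 * \<bar>C j\<bar> * sqrt (\<phi> p))"
    proof (rule sum_mono)
      fix j assume j: "j \<in> J"
      have "\<bar>f j p\<bar> * \<bar>k j p\<bar> \<le> (2 * sqrt (\<phi> p)) * \<bar>C j\<bar>"
      proof (rule mult_mono)
        show "\<bar>k j p\<bar> \<le> \<bar>C j\<bar>" using C j p by force
      qed (use sos_f_bound[OF j, of p] sos_nonneg[of p] in auto)
      then show "\<bar>f j p * k j p\<bar> \<le> 2 * \<bar>C j\<bar> * sqrt (\<phi> p)" by (simp add: abs_mult algebra_simps)
    qed
    also have "\<dots> = (\<Sum>j\<in>J. 2 * \<bar>C j\<bar>) * sqrt (\<phi> p)" by (simp add: sum_distrib_right)
    finally show ?thesis .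
  qed
  then show ?thesis by blast
qed

lemma linf_bound_local: "linf E J f w \<Longrightarrow> \<exists>C. \<forall>\<^sub>F q in at p. \<bar>w q\<bar> \<le> C * sqrt (\<phi> q)"
proof -
  assume l: "linf E J f w"
  obtain M where M: "\<forall>\<^sub>F q in at p. q \<in> RM E M" using RM_local by blast
  obtain C where C: "\<forall>q\<in>RM E M. \<bar>w q\<bar> \<le> C * sqrt (\<phi> q)" using linf_bound[OF l] by blast
  from M have "\<forall>\<^sub>F q in at p. \<bar>w q\<bar> \<le> C * sqrt (\<phi> q)" by (rule eventually_mono) (use C in blast)
  then show ?thesis by blast
qed

lemma polyE_bound_local: "polyE E c \<Longrightarrow> \<exists>C. \<forall>\<^sub>F q in at p. \<bar>c q\<bar> \<le> C"
proof -
  assume l: "polyE E c"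
  obtain M where M: "\<forall>\<^sub>F q in at p. q \<in> RM E M" using RM_local by blast
  obtain C where C: "\<forall>q\<in>RM E M. \<bar>c q\<bar> \<le> C" using polyE_bounded[OF l] by blast
  from M have "\<forall>\<^sub>F q in at p. \<bar>c q\<bar> \<le> C" by (rule eventually_mono) (use C in blast)
  then show ?thesis by blast
qed

lemma phi_tendsto: "\<phi> p = 0 \<Longrightarrow> (\<phi> \<longlongrightarrow> 0) (at p)"
proof -
  assume z: "\<phi> p = 0"
  have "isCont \<phi> p" by (rule polyE_isCont[OF sos_polyE])
  then show ?thesis using z unfolding isCont_def by simp
qed

lemma sqrt_phi_tendsto: "\<phi> p = 0 \<Longrightarrow> ((\<lambda>q. sqrt (\<phi> q)) \<longlongrightarrow> 0) (at p)"
  using tendsto_real_sqrt[OF phi_tendsto] by simp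

lemma phi_ev_small: "\<phi> p = 0 \<Longrightarrow> \<forall>\<^sub>F q in at p. \<phi> q < c" if "c > 0"
  using order_tendstoD(2)[OF phi_tendsto] that by blast

lemma linf_tendsto: "linf E J f w \<Longrightarrow> \<phi> p = 0 \<Longrightarrow> (w \<longlongrightarrow> 0) (at p)"
  using polyE_isCont[OF linf_polyE] linf_zero by (metis isCont_def)

end



definition H1 :: "(real \<Rightarrow> real) \<Rightarrow> real \<Rightarrow> real" where
  "H1 g y = (if 0 < y then deriv g y else 0)"
definition H2 :: "(real \<Rightarrow> real) \<Rightarrow> real \<Rightarrow> real" where
  "H2 g y = (if 0 < y then deriv (deriv g) y else 0)"

context adm
begin

lemma H1_deriv: "y > 0 \<Longrightarrow> (H1 g has_real_derivative deriv (deriv g) y) (at y)"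
  by (rule has_field_derivative_transform_within_open[OF d2, of y "{0<..}"]) (auto simp: H1_def)

lemma H1_cont: "y > 0 \<Longrightarrow> isCont (H1 g) y"
  using H1_deriv DERIV_isCont by blast

lemma H2_cont: "y > 0 \<Longrightarrow> isCont (H2 g) y"
proof -
  assume y: "y > 0"
  have "\<forall>x\<in>{0<..}. isCont (deriv (deriv g)) x" using c2 continuous_on_eq_continuous_at[OF open_greaterThan] by blast
  then have "isCont (deriv (deriv g)) y" using y by simp
  moreover have "\<forall>\<^sub>F z in nhds y. deriv (deriv g) z = H2 g z"
    using eventually_nhds_in_open[of "{0<..}" y] y by (auto simp: H2_def elim: eventually_mono)
  ultimately show ?thesis by (rule isCont_cong[THEN iffD1, rotated])
qed

lemma Bg0: "\<exists>K. \<forall>y. 0 \<le> y \<and> y \<le> R \<longrightarrow> \<bar>g y\<bar> \<le> K * y"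
proof -
  obtain K where K: "\<forall>y. 0 < y \<and> y \<le> R \<longrightarrow> \<bar>g y\<bar> \<le> K * y" using b0 by blast
  show ?thesis
  proof (intro exI[of _ K] allI impI)
    fix y assume "0 \<le> y \<and> y \<le> R"
    then show "\<bar>g y\<bar> \<le> K * y" using K zero[of 0] by (cases "y = 0") auto
  qed
qed

lemma Bg1: "\<exists>K. \<forall>y. y \<le> R \<longrightarrow> \<bar>H1 g y\<bar> \<le> K"
proof -
  obtain K where K: "\<forall>y. 0 < y \<and> y \<le> R \<longrightarrow> \<bar>deriv g y\<bar> \<le> K" using b1 by blast
  show ?thesis
    by (intro exI[of _ "max K 0"] allI impI) (use K in \<open>auto simp: H1_def le_max_iff_disj\<close>)
qed

lemma Bg2: "\<exists>K. \<forall>y. y \<le> R \<longrightarrow> \<bar>H2 g y\<bar> * y \<le> K"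
proof -
  obtain K where K: "\<forall>y. 0 < y \<and> y \<le> R \<longrightarrow> \<bar>deriv (deriv g) y\<bar> * y \<le> K" using b2 by blast
  show ?thesis
    by (intro exI[of _ "max K 0"] allI impI) (use K in \<open>auto simp: H2_def le_max_iff_disj\<close>)
qed

end

locale admsos = adm g for g +
  fixes E :: "'v::finite set set" and J :: "'j set" and f :: "'j \<Rightarrow> real^'n::finite^'v \<Rightarrow> real" and \<phi>
  assumes S: "sos E J f \<phi>"
begin

lemma nonneg: "\<phi> q \<ge> 0" using sos_nonneg[OF S] .

lemma Dphi_zero: "\<phi> p = 0 \<Longrightarrow> Dd \<phi> v p = 0"
  using linf_zero[OF S sos_Dd_linf[OF S]] by blast

lemma H1_ev_bdd: "\<phi> p = 0 \<Longrightarrow> \<exists>K. \<forall>\<^sub>F q in at p. \<bar>H1 g (\<phi> q)\<bar> \<le> K"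
proof -
  assume z: "\<phi> p = 0"
  obtain K where K: "\<forall>y. y \<le> 1 \<longrightarrow> \<bar>H1 g y\<bar> \<le> K" using Bg1 by blast
  have "\<forall>\<^sub>F q in at p. \<phi> q < 1" using phi_ev_small[OF S zero_less_one z] by simp
  then have "\<forall>\<^sub>F q in at p. \<bar>H1 g (\<phi> q)\<bar> \<le> K" by (rule eventually_mono) (use K in auto)
  then show ?thesis by blast
qed

lemma U0: "((\<lambda>q. g (\<phi> q)) has_derivative (\<lambda>v. H1 g (\<phi> p) * Dd \<phi> v p)) (at p)"
proof (cases "\<phi> p > 0")
  case True
  have "(g has_derivative (\<lambda>x. deriv g (\<phi> p) * x)) (at (\<phi> p))"
    using d1[OF True] by (simp add: has_field_derivative_def)
  from has_derivative_compose[OF polyE_has_deriv[OF sos_polyE[OF S]] this]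
  show ?thesis using True by (simp add: H1_def)
next
  case False
  then have z: "\<phi> p = 0" using nonneg[of p] by simp
  define a where "a q = (if \<phi> q > 0 then g (\<phi> q) / \<phi> q else 0)" for q
  have eq: "g (\<phi> q) = a q * \<phi> q" for q
    using nonneg[of q] zero[of 0] by (cases "\<phi> q > 0") (auto simp: a_def)
  obtain K where K: "\<forall>y. 0 \<le> y \<and> y \<le> 1 \<longrightarrow> \<bar>g y\<bar> \<le> K * y" using Bg0 by blast
  have "\<forall>\<^sub>F q in at p. \<phi> q < 1" using phi_ev_small[OF S zero_less_one z] by simp
  then have ab: "\<forall>\<^sub>F q in at p. \<bar>a q\<bar> \<le> \<bar>K\<bar>"
  proof (rule eventually_mono)
    fix q assume q: "\<phi> q < 1"
    show "\<bar>a q\<bar> \<le> \<bar>K\<bar>"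
    proof (cases "\<phi> q > 0")
      case True
      then have "\<bar>g (\<phi> q)\<bar> \<le> K * \<phi> q" using K q by auto
      also have "\<dots> \<le> \<bar>K\<bar> * \<phi> q" using True by (intro mult_right_mono) auto
      finally show ?thesis using True by (auto simp: a_def abs_divide divide_le_eq)
    qed (simp add: a_def)
  qed
  have d0: "(\<phi> has_derivative (\<lambda>v. 0)) (at p)"
    using polyE_has_deriv[OF sos_polyE[OF S], of p] Dphi_zero[OF z] by simp
  have "((\<lambda>q. a q * \<phi> q) has_derivative (\<lambda>v. 0)) (at p)"
    by (rule deriv_zero_mult[OF ab d0 z])
  then show ?thesis using z by (simp add: eq H1_def)
qed

lemma U0_Dd: "Dd (\<lambda>q. g (\<phi> q)) v p = H1 g (\<phi> p) * Dd \<phi> v p"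
  using Dd_eq[OF U0] .

lemma U_cont: "isCont (\<lambda>q. g (\<phi> q)) p"
  using cont polyE_isCont[OF sos_polyE[OF S]] by (rule continuous_at_compose[unfolded o_def, rotated])

lemma H1w_cont:
  assumes w: "isCont w p" and wz: "\<phi> p = 0 \<Longrightarrow> w p = 0"
  shows "isCont (\<lambda>q. H1 g (\<phi> q) * w q) p"
proof (cases "\<phi> p > 0")
  case True
  have "isCont (\<lambda>q. H1 g (\<phi> q)) p"
    using H1_cont[OF True] polyE_isCont[OF sos_polyE[OF S]] by (rule continuous_at_compose[unfolded o_def, rotated])
  then show ?thesis using w by (intro continuous_intros)
next
  case False
  then have z: "\<phi> p = 0" using nonneg[of p] by simp
  obtain K where K: "\<forall>\<^sub>F q in at p. \<bar>H1 g (\<phi> q)\<bar> \<le> K" using H1_ev_bdd[OF z] by blast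
  have "(w \<longlongrightarrow> 0) (at p)" using w wz[OF z] by (simp add: isCont_def)
  then have "((\<lambda>q. H1 g (\<phi> q) * w q) \<longlongrightarrow> 0) (at p)" by (rule tendsto_bdd_zero[OF K])
  then show ?thesis using z by (simp add: isCont_def H1_def)
qed

lemma T1:
  assumes w: "polyE E w" and wz: "\<And>p v. \<phi> p = 0 \<Longrightarrow> w p = 0 \<and> Dd w v p = 0"
  shows "((\<lambda>q. H1 g (\<phi> q) * w q) has_derivative
     (\<lambda>v. H2 g (\<phi> p) * Dd \<phi> v p * w p + H1 g (\<phi> p) * Dd w v p)) (at p)"
proof (cases "\<phi> p > 0")
  case True
  have "(H1 g has_derivative (\<lambda>x. deriv (deriv g) (\<phi> p) * x)) (at (\<phi> p))"
    using H1_deriv[OF True] by (simp add: has_field_derivative_def)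
  from has_derivative_compose[OF polyE_has_deriv[OF sos_polyE[OF S]] this]
  have "((\<lambda>q. H1 g (\<phi> q)) has_derivative (\<lambda>v. H2 g (\<phi> p) * Dd \<phi> v p)) (at p)"
    using True by (simp add: H2_def)
  from has_derivative_mult[OF this polyE_has_deriv[OF w]]
  show ?thesis by (simp add: algebra_simps)
next
  case False
  then have z: "\<phi> p = 0" using nonneg[of p] by simp
  obtain K where K: "\<forall>\<^sub>F q in at p. \<bar>H1 g (\<phi> q)\<bar> \<le> K" using H1_ev_bdd[OF z] by blast
  have d0: "(w has_derivative (\<lambda>v. 0)) (at p)"
    using polyE_has_deriv[OF w, of p] wz[OF z] by simp
  have "((\<lambda>q. H1 g (\<phi> q) * w q) has_derivative (\<lambda>v. 0)) (at p)"
    by (rule deriv_zero_mult[OF K d0]) (use wz[OF z] in auto)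
  then show ?thesis using z by (simp add: H1_def H2_def)
qed

lemma H2w_cont:
  assumes w: "isCont w p" and wz: "\<phi> p = 0 \<Longrightarrow> w p = 0 \<and> (\<exists>C. \<forall>\<^sub>F q in at p. \<bar>w q\<bar> \<le> C * (\<phi> q * sqrt (\<phi> q)))"
  shows "isCont (\<lambda>q. H2 g (\<phi> q) * w q) p"
proof (cases "\<phi> p > 0")
  case True
  have "isCont (\<lambda>q. H2 g (\<phi> q)) p"
    using H2_cont[OF True] polyE_isCont[OF sos_polyE[OF S]] by (rule continuous_at_compose[unfolded o_def, rotated])
  then show ?thesis using w by (intro continuous_intros)
next
  case False
  then have z: "\<phi> p = 0" using nonneg[of p] by simp
  obtain C where C: "\<forall>\<^sub>F q in at p. \<bar>w q\<bar> \<le> C * (\<phi> q * sqrt (\<phi> q))" using wz[OF z] by blast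
  obtain K where K: "\<forall>y. y \<le> 1 \<longrightarrow> \<bar>H2 g y\<bar> * y \<le> K" using Bg2 by blast
  have sm: "\<forall>\<^sub>F q in at p. \<phi> q < 1" using phi_ev_small[OF S zero_less_one z] by simp
  have l: "((\<lambda>q. (\<bar>K\<bar> * \<bar>C\<bar>) * sqrt (\<phi> q)) \<longlongrightarrow> 0) (at p)"
    by (rule tendsto_mult_right_zero[OF sqrt_phi_tendsto[OF S z]])
  have "((\<lambda>q. H2 g (\<phi> q) * w q) \<longlongrightarrow> 0) (at p)"
  proof (rule Lim_null_comparison[OF _ l])
    show "\<forall>\<^sub>F q in at p. norm (H2 g (\<phi> q) * w q) \<le> \<bar>K\<bar> * \<bar>C\<bar> * sqrt (\<phi> q)"
      using C sm
    proof eventually_elim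
      case (elim q)
      show ?case
      proof (cases "\<phi> q > 0")
        case True
        have "\<bar>H2 g (\<phi> q)\<bar> * \<phi> q \<le> K" using K elim by auto
        have "\<bar>H2 g (\<phi> q) * w q\<bar> \<le> \<bar>H2 g (\<phi> q)\<bar> * (\<bar>C\<bar> * (\<phi> q * sqrt (\<phi> q)))"
          unfolding abs_mult using elim by (intro mult_left_mono) (auto intro: order_trans[OF _ mult_right_mono[OF abs_ge_self]] simp: nonneg)
        also have "\<dots> = (\<bar>H2 g (\<phi> q)\<bar> * \<phi> q) * (\<bar>C\<bar> * sqrt (\<phi> q))" by (simp add: algebra_simps)
        also have "\<dots> \<le> \<bar>K\<bar> * (\<bar>C\<bar> * sqrt (\<phi> q))"
          using \<open>\<bar>H2 g (\<phi> q)\<bar> * \<phi> q \<le> K\<close> by (intro mult_right_mono) (auto simp: nonneg)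
        finally show ?thesis by (simp add: algebra_simps)
      next
        case False
        then have "\<phi> q = 0" using nonneg[of q] by simp
        then show ?thesis by (simp add: H2_def)
      qed
    qed
  qed
  then show ?thesis using z by (simp add: isCont_def H2_def)
qed

end



locale admsosA = admsos g E J f \<phi> for g E J f \<phi> +
  fixes A
  assumes A: "linf E J f A"
begin

definition W where "W v p = Dd \<phi> v p * A p"
definition DF1 where "DF1 v p = H1 g (\<phi> p) * W v p + g (\<phi> p) * Dd A v p"
definition DDF1 where "DDF1 v w p = (H2 g (\<phi> p) * Dd \<phi> w p * W v p + H1 g (\<phi> p) * Dd (W v) w p)
   + (H1 g (\<phi> p) * Dd \<phi> w p * Dd A v p + g (\<phi> p) * Dd (Dd A v) w p)"

lemma phiP: "polyE E \<phi>" using sos_polyE[OF S] .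
lemma AP: "polyE E A" using linf_polyE[OF S A] .
lemma Dphi_lin: "linf E J f (Dd \<phi> v)" using sos_Dd_linf[OF S] .
lemma A_zero: "\<phi> p = 0 \<Longrightarrow> A p = 0" using linf_zero[OF S A] .

lemma WP: "polyE E (W v)"
  unfolding W_def by (rule polyE.mul[OF polyE_Dd[OF phiP] AP])

lemma W_Dd: "Dd (W v) w p = Dd \<phi> v p * Dd A w p + Dd (Dd \<phi> v) w p * A p"
  unfolding W_def by (rule Dd_mult[OF polyE_Dd[OF phiP] AP])

lemma W_zero: "\<phi> p = 0 \<Longrightarrow> W v p = 0 \<and> Dd (W v) w p = 0"
  unfolding W_Dd by (simp add: W_def Dphi_zero A_zero)

lemma DW_lin: "linf E J f (Dd (W v) w)"
proof -
  have l1: "linf E J f (\<lambda>p. Dd \<phi> v p * Dd A w p)"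
    by (rule linf_mult[OF S Dphi_lin]) (intro polyE_Dd AP)
  have l2: "linf E J f (\<lambda>p. A p * Dd (Dd \<phi> v) w p)"
    by (rule linf_mult[OF S A]) (intro polyE_Dd phiP)
  from l1 l2 obtain k1 k2 where k: "\<forall>j\<in>J. polyE E (k1 j)" "\<forall>p. Dd \<phi> v p * Dd A w p = (\<Sum>j\<in>J. f j p * k1 j p)"
     "\<forall>j\<in>J. polyE E (k2 j)" "\<forall>p. A p * Dd (Dd \<phi> v) w p = (\<Sum>j\<in>J. f j p * k2 j p)"
    unfolding linf_def by blast
  show ?thesis unfolding linf_def
    by (intro exI[of _ "\<lambda>j p. k1 j p + k2 j p"] conjI)
       (use k in \<open>auto intro: polyE.add simp: W_Dd sum.distrib algebra_simps\<close>)
qed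

lemma F1_deriv: "((\<lambda>p. g (\<phi> p) * A p) has_derivative (\<lambda>v. DF1 v p)) (at p)"
  using has_derivative_mult[OF U0 polyE_has_deriv[OF AP]]
  by (simp add: DF1_def W_def algebra_simps)

lemma DF1_deriv: "((\<lambda>p. DF1 v p) has_derivative (\<lambda>w. DDF1 v w p)) (at p)"
proof -
  have t1: "((\<lambda>q. H1 g (\<phi> q) * W v q) has_derivative
     (\<lambda>w. H2 g (\<phi> p) * Dd \<phi> w p * W v p + H1 g (\<phi> p) * Dd (W v) w p)) (at p)"
    by (rule T1[OF WP W_zero])
  have t2: "((\<lambda>q. g (\<phi> q) * Dd A v q) has_derivative
      (\<lambda>w. g (\<phi> p) * Dd (Dd A v) w p + H1 g (\<phi> p) * Dd \<phi> w p * Dd A v p)) (at p)"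
    using has_derivative_mult[OF U0 polyE_has_deriv[OF polyE_Dd[OF AP]]] by simp
  show ?thesis unfolding DF1_def DDF1_def
    using has_derivative_add[OF t1 t2] by (simp add: algebra_simps)
qed

lemma DF1_linear: "DF1 (c *\<^sub>R v) p = c * DF1 v p"
  unfolding DF1_def W_def using Dd_linear[OF phiP] Dd_linear[OF AP] by (simp add: algebra_simps)

lemma DF1_cont: "isCont (\<lambda>p. DF1 v p) p"
proof -
  have "isCont (\<lambda>q. H1 g (\<phi> q) * W v q) p"
    by (rule H1w_cont) (use polyE_isCont[OF WP] W_zero in auto)
  moreover have "isCont (\<lambda>q. g (\<phi> q) * Dd A v q) p"
    by (intro continuous_intros U_cont polyE_isCont[OF polyE_Dd[OF AP]])
  ultimately show ?thesis unfolding DF1_def by (rule isCont_add)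
qed

lemma sq_sqrt: "\<phi> q = sqrt (\<phi> q) * sqrt (\<phi> q)"
  using nonneg[of q] by (simp add: real_sqrt_mult_self)

lemma DDF1_cont: "isCont (\<lambda>p. DDF1 v w p) p"
proof -
  have c1: "isCont (\<lambda>q. H2 g (\<phi> q) * (Dd \<phi> w q * W v q)) p"
  proof (rule H2w_cont)
    show "isCont (\<lambda>q. Dd \<phi> w q * W v q) p" by (intro continuous_intros polyE_isCont[OF polyE_Dd[OF phiP]] polyE_isCont[OF WP])
  next
    assume z: "\<phi> p = 0"
    obtain C1 where C1: "\<forall>\<^sub>F q in at p. \<bar>Dd \<phi> w q\<bar> \<le> C1 * sqrt (\<phi> q)" using linf_bound_local[OF S Dphi_lin] by blast
    obtain C2 where C2: "\<forall>\<^sub>F q in at p. \<bar>Dd \<phi> v q\<bar> \<le> C2 * sqrt (\<phi> q)" using linf_bound_local[OF S Dphi_lin] by blast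
    obtain C3 where C3: "\<forall>\<^sub>F q in at p. \<bar>A q\<bar> \<le> C3 * sqrt (\<phi> q)" using linf_bound_local[OF S A] by blast
    have "\<forall>\<^sub>F q in at p. \<bar>Dd \<phi> w q * W v q\<bar> \<le> (C1 * C2 * C3) * (\<phi> q * sqrt (\<phi> q))"
      using C1 C2 C3
    proof eventually_elim
      case (elim q)
      have "\<bar>Dd \<phi> w q * W v q\<bar> = \<bar>Dd \<phi> w q\<bar> * \<bar>Dd \<phi> v q\<bar> * \<bar>A q\<bar>" by (simp add: W_def abs_mult)
      also have "\<dots> \<le> (C1 * sqrt (\<phi> q)) * (C2 * sqrt (\<phi> q)) * (C3 * sqrt (\<phi> q))"
        using elim by (intro mult_mono) (auto intro: mult_nonneg_nonneg order_trans[OF abs_ge_zero])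
      also have "\<dots> = (C1 * C2 * C3) * (\<phi> q * sqrt (\<phi> q))" by (subst (4) sq_sqrt) (simp add: algebra_simps)
      finally show ?case .
    qed
    then show "Dd \<phi> w p * W v p = 0 \<and> (\<exists>C. \<forall>\<^sub>F q in at p. \<bar>Dd \<phi> w q * W v q\<bar> \<le> C * (\<phi> q * sqrt (\<phi> q)))"
      using z W_zero by auto
  qed
  have c2: "isCont (\<lambda>q. H1 g (\<phi> q) * Dd (W v) w q) p"
    by (rule H1w_cont) (use polyE_isCont[OF polyE_Dd[OF WP]] W_zero in auto)
  have c3: "isCont (\<lambda>q. H1 g (\<phi> q) * (Dd \<phi> w q * Dd A v q)) p"
    by (rule H1w_cont) (auto intro!: continuous_intros polyE_isCont[OF polyE_Dd[OF phiP]] polyE_isCont[OF polyE_Dd[OF AP]] simp: Dphi_zero)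
  have c4: "isCont (\<lambda>q. g (\<phi> q) * Dd (Dd A v) w q) p"
    by (intro continuous_intros U_cont polyE_isCont[OF polyE_Dd[OF polyE_Dd[OF AP]]])
  have "isCont (\<lambda>q. H2 g (\<phi> q) * (Dd \<phi> w q * W v q) + H1 g (\<phi> q) * Dd (W v) w q
      + (H1 g (\<phi> q) * (Dd \<phi> w q * Dd A v q) + g (\<phi> q) * Dd (Dd A v) w q)) p"
    by (intro isCont_add c1 c2 c3 c4)
  moreover have "(\<lambda>p. DDF1 v w p) = (\<lambda>q. H2 g (\<phi> q) * (Dd \<phi> w q * W v q) + H1 g (\<phi> q) * Dd (W v) w q
      + (H1 g (\<phi> q) * (Dd \<phi> w q * Dd A v q) + g (\<phi> q) * Dd (Dd A v) w q))"
    by (simp add: DDF1_def fun_eq_iff mult.assoc)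
  ultimately show ?thesis by simp
qed

end



definition bnd :: "'a set \<Rightarrow> ('a \<Rightarrow> real) \<Rightarrow> ('a \<Rightarrow> real) \<Rightarrow> bool" where
  "bnd S t f \<longleftrightarrow> (\<forall>p\<in>S. 0 \<le> t p) \<and> (\<exists>C\<ge>0. \<forall>p\<in>S. \<bar>f p\<bar> \<le> C * t p)"

lemma bndI: "(\<And>p. p \<in> S \<Longrightarrow> 0 \<le> t p) \<Longrightarrow> (\<And>p. p \<in> S \<Longrightarrow> \<bar>f p\<bar> \<le> C * t p) \<Longrightarrow> bnd S t f"
  unfolding bnd_def
proof (intro conjI ballI exI[of _ "max C 0"])
  fix p assume "\<And>p. p \<in> S \<Longrightarrow> 0 \<le> t p" "\<And>p. p \<in> S \<Longrightarrow> \<bar>f p\<bar> \<le> C * t p" "p \<in> S"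
  then show "\<bar>f p\<bar> \<le> max C 0 * t p" by (meson max.cobounded1 mult_right_mono order_trans)
qed auto

lemma bnd_mult: "bnd S t1 f1 \<Longrightarrow> bnd S t2 f2 \<Longrightarrow> bnd S (\<lambda>p. t1 p * t2 p) (\<lambda>p. f1 p * f2 p)"
proof -
  assume a: "bnd S t1 f1" "bnd S t2 f2"
  then obtain C1 C2 where C: "C1 \<ge> 0" "\<forall>p\<in>S. \<bar>f1 p\<bar> \<le> C1 * t1 p" "C2 \<ge> 0" "\<forall>p\<in>S. \<bar>f2 p\<bar> \<le> C2 * t2 p"
    "\<forall>p\<in>S. 0 \<le> t1 p" "\<forall>p\<in>S. 0 \<le> t2 p" unfolding bnd_def by blast
  show ?thesis
  proof (rule bndI[where C="C1 * C2"])
    fix p assume p: "p \<in> S"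
    then show "0 \<le> t1 p * t2 p" using C by simp
    have "\<bar>f1 p * f2 p\<bar> \<le> (C1 * t1 p) * (C2 * t2 p)"
      unfolding abs_mult using C p by (intro mult_mono) auto
    then show "\<bar>f1 p * f2 p\<bar> \<le> C1 * C2 * (t1 p * t2 p)" by (simp add: algebra_simps)
  qed
qed

lemma bnd_add: "bnd S t f1 \<Longrightarrow> bnd S t f2 \<Longrightarrow> bnd S t (\<lambda>p. f1 p + f2 p)"
proof -
  assume a: "bnd S t f1" "bnd S t f2"
  then obtain C1 C2 where C: "C1 \<ge> 0" "\<forall>p\<in>S. \<bar>f1 p\<bar> \<le> C1 * t p" "C2 \<ge> 0" "\<forall>p\<in>S. \<bar>f2 p\<bar> \<le> C2 * t p"
    "\<forall>p\<in>S. 0 \<le> t p" unfolding bnd_def by blast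
  show ?thesis
  proof (rule bndI[where C="C1 + C2"])
    fix p assume p: "p \<in> S"
    then show "0 \<le> t p" using C by simp
    have "\<bar>f1 p + f2 p\<bar> \<le> C1 * t p + C2 * t p" using C p by (meson abs_triangle_ineq add_mono order_trans)
    then show "\<bar>f1 p + f2 p\<bar> \<le> (C1 + C2) * t p" by (simp add: algebra_simps)
  qed
qed

lemma bnd_mono: "bnd S t f \<Longrightarrow> (\<And>p. p \<in> S \<Longrightarrow> t p \<le> c * t' p) \<Longrightarrow> (\<And>p. p \<in> S \<Longrightarrow> 0 \<le> t' p) \<Longrightarrow> bnd S t' f"
proof -
  assume a: "bnd S t f" and m: "\<And>p. p \<in> S \<Longrightarrow> t p \<le> c * t' p" and n: "\<And>p. p \<in> S \<Longrightarrow> 0 \<le> t' p"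
  then obtain C where C: "C \<ge> 0" "\<forall>p\<in>S. \<bar>f p\<bar> \<le> C * t p" unfolding bnd_def by blast
  show ?thesis
  proof (rule bndI[where C="C * c", OF n])
    fix p assume p: "p \<in> S"
    have "\<bar>f p\<bar> \<le> C * t p" using C p by auto
    also have "\<dots> \<le> C * (c * t' p)" using m[OF p] C by (intro mult_left_mono) auto
    finally show "\<bar>f p\<bar> \<le> C * c * t' p" by (simp add: algebra_simps)
  qed
qed

lemma bnd_cong: "bnd S t f \<Longrightarrow> (\<And>p. p \<in> S \<Longrightarrow> f p = f' p) \<Longrightarrow> bnd S t f'"
  unfolding bnd_def by auto

lemma bnd_subset: "bnd S t f \<Longrightarrow> T \<subseteq> S \<Longrightarrow> bnd T t f"
  unfolding bnd_def by blast

lemma bnd_final: "bnd S t f \<Longrightarrow> \<exists>c>0. \<forall>p. p \<in> S \<longrightarrow> \<bar>f p\<bar> \<le> c * t p"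
proof -
  assume "bnd S t f"
  then obtain C where C: "C \<ge> 0" "\<forall>p\<in>S. \<bar>f p\<bar> \<le> C * t p" "\<forall>p\<in>S. 0 \<le> t p" unfolding bnd_def by blast
  have "\<forall>p. p \<in> S \<longrightarrow> \<bar>f p\<bar> \<le> (C + 1) * t p"
  proof (intro allI impI)
    fix p assume p: "p \<in> S"
    have "C * t p \<le> (C + 1) * t p" using C p by (intro mult_right_mono) auto
    then show "\<bar>f p\<bar> \<le> (C + 1) * t p" using C p by force
  qed
  then show ?thesis using C by (intro exI[of _ "C + 1"]) auto
qed

context admsosA
begin

context
  fixes S M R
  assumes SM: "S \<subseteq> RM E M" and SR: "\<And>p. p \<in> S \<Longrightarrow> \<phi> p \<le> R"
begin

lemma sq_nonneg: "0 \<le> sqrt (\<phi> p)" using nonneg by simp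

lemma b_u: "bnd S \<phi> (\<lambda>p. g (\<phi> p))"
proof -
  obtain K where K: "\<forall>y. 0 \<le> y \<and> y \<le> R \<longrightarrow> \<bar>g y\<bar> \<le> K * y" using Bg0 by blast
  show ?thesis by (rule bndI[where C=K]) (use K SR nonneg in auto)
qed

lemma b_H1: "bnd S (\<lambda>p. 1) (\<lambda>p. H1 g (\<phi> p))"
proof -
  obtain K where K: "\<forall>y. y \<le> R \<longrightarrow> \<bar>H1 g y\<bar> \<le> K" using Bg1 by blast
  show ?thesis by (rule bndI[where C=K]) (use K SR in auto)
qed

lemma b_lin: "linf E J f w \<Longrightarrow> bnd S (\<lambda>p. sqrt (\<phi> p)) w"
proof -
  assume "linf E J f w"
  then obtain C where C: "\<forall>p\<in>RM E M. \<bar>w p\<bar> \<le> C * sqrt (\<phi> p)" using linf_bound[OF S] by blast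
  show ?thesis by (rule bndI[where C=C]) (use C SM sq_nonneg in auto)
qed

lemma b_poly: "polyE E c \<Longrightarrow> bnd S (\<lambda>p. 1) c"
proof -
  assume "polyE E c"
  then obtain C where C: "\<forall>p\<in>RM E M. \<bar>c p\<bar> \<le> C" using polyE_bounded by blast
  show ?thesis by (rule bndI[where C=C]) (use C SM in auto)
qed

lemma phi_le_sqrt: "p \<in> S \<Longrightarrow> \<phi> p \<le> sqrt R * sqrt (\<phi> p)"
proof -
  assume p: "p \<in> S"
  have "\<phi> p = sqrt (\<phi> p) * sqrt (\<phi> p)" by (rule sq_sqrt)
  also have "\<dots> \<le> sqrt R * sqrt (\<phi> p)" using SR[OF p] sq_nonneg by (intro mult_right_mono) auto
  finally show ?thesis .
qed

lemma b_u_sqrt: "bnd S (\<lambda>p. sqrt (\<phi> p)) (\<lambda>p. g (\<phi> p))"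
  by (rule bnd_mono[OF b_u phi_le_sqrt sq_nonneg])

lemma b_H1D: "bnd S (\<lambda>p. sqrt (\<phi> p)) (\<lambda>p. H1 g (\<phi> p) * Dd \<phi> v p)"
  using bnd_mult[OF b_H1 b_lin[OF Dphi_lin]] by simp

lemma b_F1: "bnd S (\<lambda>p. \<phi> p * sqrt (\<phi> p)) (\<lambda>p. g (\<phi> p) * A p)"
  by (rule bnd_mult[OF b_u b_lin[OF A]])

lemma b_DF1: "bnd S \<phi> (\<lambda>p. DF1 v p)"
proof -
  have 1: "bnd S (\<lambda>p. sqrt (\<phi> p) * sqrt (\<phi> p)) (\<lambda>p. H1 g (\<phi> p) * Dd \<phi> v p * A p)"
    by (rule bnd_mult[OF b_H1D b_lin[OF A]])
  have 1: "bnd S \<phi> (\<lambda>p. H1 g (\<phi> p) * Dd \<phi> v p * A p)"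
    by (rule bnd_mono[OF 1, where c=1]) (use sq_sqrt nonneg in auto)
  have 2: "bnd S (\<lambda>p. \<phi> p * 1) (\<lambda>p. g (\<phi> p) * Dd A v p)"
    by (rule bnd_mult[OF b_u b_poly[OF polyE_Dd[OF AP]]])
  have "bnd S \<phi> (\<lambda>p. H1 g (\<phi> p) * Dd \<phi> v p * A p + g (\<phi> p) * Dd A v p)"
    by (rule bnd_add[OF 1]) (use 2 in simp)
  then show ?thesis by (rule bnd_cong) (simp add: DF1_def W_def mult.assoc)
qed

lemma b_H2term: "bnd S (\<lambda>p. sqrt (\<phi> p)) (\<lambda>p. H2 g (\<phi> p) * Dd \<phi> w p * W v p)"
proof -
  have 1: "bnd S (\<lambda>p. sqrt (\<phi> p) * sqrt (\<phi> p) * sqrt (\<phi> p)) (\<lambda>p. Dd \<phi> w p * Dd \<phi> v p * A p)"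
    by (intro bnd_mult b_lin Dphi_lin A)
  then obtain C where C: "C \<ge> 0" "\<forall>p\<in>S. \<bar>Dd \<phi> w p * Dd \<phi> v p * A p\<bar> \<le> C * (sqrt (\<phi> p) * sqrt (\<phi> p) * sqrt (\<phi> p))"
    unfolding bnd_def by blast
  obtain K where K: "\<forall>y. y \<le> R \<longrightarrow> \<bar>H2 g y\<bar> * y \<le> K" using Bg2 by blast
  show ?thesis
  proof (rule bndI[where C="K * C"])
    fix p assume p: "p \<in> S"
    show "0 \<le> sqrt (\<phi> p)" by (rule sq_nonneg)
    show "\<bar>H2 g (\<phi> p) * Dd \<phi> w p * W v p\<bar> \<le> K * C * sqrt (\<phi> p)"
    proof (cases "\<phi> p > 0")
      case True
      have kk: "\<bar>H2 g (\<phi> p)\<bar> * \<phi> p \<le> K" using K SR[OF p] by auto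
      have "\<bar>H2 g (\<phi> p) * Dd \<phi> w p * W v p\<bar> = \<bar>H2 g (\<phi> p)\<bar> * \<bar>Dd \<phi> w p * Dd \<phi> v p * A p\<bar>"
        by (simp add: W_def abs_mult)
      also have "\<dots> \<le> \<bar>H2 g (\<phi> p)\<bar> * (C * (\<phi> p * sqrt (\<phi> p)))"
        using C p sq_sqrt[of p] by (intro mult_left_mono) (auto simp: mult.assoc)
      also have "\<dots> = (\<bar>H2 g (\<phi> p)\<bar> * \<phi> p) * (C * sqrt (\<phi> p))" by (simp add: algebra_simps)
      also have "\<dots> \<le> K * (C * sqrt (\<phi> p))" using kk C sq_nonneg by (intro mult_right_mono) auto
      finally show ?thesis by (simp add: algebra_simps)
    next
      case False
      then have "\<phi> p = 0" using nonneg[of p] by simp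
      then show ?thesis by (simp add: H2_def)
    qed
  qed
qed

lemma b_DDF1: "bnd S (\<lambda>p. sqrt (\<phi> p)) (\<lambda>p. DDF1 v w p)"
proof -
  have 2: "bnd S (\<lambda>p. 1 * sqrt (\<phi> p)) (\<lambda>p. H1 g (\<phi> p) * Dd (W v) w p)"
    by (rule bnd_mult[OF b_H1 b_lin[OF DW_lin]])
  have 3: "bnd S (\<lambda>p. sqrt (\<phi> p) * 1) (\<lambda>p. H1 g (\<phi> p) * Dd \<phi> w p * Dd A v p)"
    by (rule bnd_mult[OF b_H1D b_poly[OF polyE_Dd[OF AP]]])
  have 4: "bnd S (\<lambda>p. sqrt (\<phi> p) * 1) (\<lambda>p. g (\<phi> p) * Dd (Dd A v) w p)"
    by (rule bnd_mult[OF b_u_sqrt b_poly[OF polyE_Dd[OF polyE_Dd[OF AP]]]])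
  have "bnd S (\<lambda>p. sqrt (\<phi> p)) (\<lambda>p. (H2 g (\<phi> p) * Dd \<phi> w p * W v p + H1 g (\<phi> p) * Dd (W v) w p)
   + (H1 g (\<phi> p) * Dd \<phi> w p * Dd A v p + g (\<phi> p) * Dd (Dd A v) w p))"
    using 2 3 4 by (intro bnd_add b_H2term) auto
  then show ?thesis by (rule bnd_cong) (simp add: DDF1_def)
qed

end

end



lemma norm_sq_sum: "(norm (x::real^'n))\<^sup>2 = (\<Sum>k\<in>UNIV. (x \<bullet> axis k 1)\<^sup>2)"
proof -
  have "(norm x)\<^sup>2 = x \<bullet> x" by (rule power2_norm_eq_inner)
  also have "\<dots> = (\<Sum>k\<in>UNIV. x $ k * x $ k)" by (simp add: inner_vec_def)
  finally show ?thesis unfolding inner_axis by (simp add: power2_eq_square)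
qed

lemma edge_pair: "card e = 2 \<Longrightarrow> \<exists>a c. a \<noteq> c \<and> e = {a, c}"
  using card_2_iff by metis

lemma edge_term_pair:
  assumes ac: "a \<noteq> c"
  shows "edge_term d p {a, c} = ((norm (p$c - p$a))\<^sup>2 - (d {a, c})\<^sup>2)\<^sup>2"
proof -
  define i where "i = (SOME i. i \<in> {a, c})"
  define j where "j = (SOME j. j \<in> {a, c} \<and> j \<noteq> i)"
  have i: "i \<in> {a, c}" unfolding i_def by (rule someI[of _ a]) simp
  have "\<exists>j. j \<in> {a, c} \<and> j \<noteq> i" using ac i by auto
  then have j: "j \<in> {a, c} \<and> j \<noteq> i" unfolding j_def by (rule someI_ex)
  have "(i = a \<and> j = c) \<or> (i = c \<and> j = a)" using i j by auto
  then have "norm (p$j - p$i) = norm (p$c - p$a)" by (auto simp: norm_minus_commute)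
  then show ?thesis unfolding edge_term_def Let_def i_def[symmetric] j_def[symmetric] by simp
qed

lemma edge_term_nonneg: "edge_term d p e \<ge> 0"
  unfolding edge_term_def Let_def by simp

locale gsetup =
  fixes E :: "'v::finite set set" and d :: "'v set \<Rightarrow> real"
  assumes E_edges: "\<forall>e\<in>E. card e = 2"
begin

definition fJ where "fJ i = {j. {i, j} \<in> E}"
definition ff :: "'v \<Rightarrow> 'v \<Rightarrow> real^'n::finite^'v \<Rightarrow> real" where
  "ff i j p = (norm (p$j - p$i))\<^sup>2 - (d {i, j})\<^sup>2"

lemma fJ_ne: "j \<in> fJ i \<Longrightarrow> j \<noteq> i"
  using E_edges unfolding fJ_def by force

lemma ff_poly: "{i, j} \<in> E \<Longrightarrow> polyE E (ff i j)"
proof -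
  assume ij: "{i, j} \<in> E"
  have "polyE E (\<lambda>p::real^'n^'v. (\<Sum>k\<in>UNIV. ((p$j - p$i) \<bullet> axis k 1)\<^sup>2) - (d {i, j})\<^sup>2)"
    by (intro polyE_minus polyE_sum polyE_pow2 polyE.atom[OF ij] polyE.cst) auto
  then show ?thesis unfolding ff_def[abs_def] norm_sq_sum .
qed

lemma psi_sos: "sos E (fJ i) (ff i) (psi_i E d i)"
  unfolding sos_def
proof (intro conjI ballI allI)
  show "finite (fJ i)" by simp
next
  fix j assume "j \<in> fJ i" then show "polyE E (ff i j)" using ff_poly unfolding fJ_def by blast
next
  fix p :: "real^'n^'v"
  show "psi_i E d i p = 1/4 * (\<Sum>j\<in>fJ i. (ff i j p)\<^sup>2)"
    unfolding psi_i_def fJ_def ff_def ..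
qed

lemma edge_poly: "e \<in> E \<Longrightarrow> polyE E (\<lambda>p::real^'n^'v. edge_term d p e)"
proof -
  assume e: "e \<in> E"
  then obtain a c where ac: "a \<noteq> c" "e = {a, c}" using edge_pair E_edges by blast
  have "polyE E (\<lambda>p::real^'n^'v. (ff a c p)\<^sup>2)" using ff_poly e ac by (intro polyE_pow2) auto
  then show ?thesis using ac by (simp add: edge_term_pair ff_def)
qed

definition Rr :: "'v \<Rightarrow> real^'n::finite^'v \<Rightarrow> real" where
  "Rr i p = 1/4 * (\<Sum>e\<in>{e\<in>E. i \<notin> e}. edge_term d p e)"

lemma Rr_poly: "polyE E (Rr i)"
  unfolding Rr_def[abs_def] by (intro polyE_cmult polyE_sum edge_poly) auto

lemma Rr_nonneg: "Rr i p \<ge> 0"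
  unfolding Rr_def by (auto intro: sum_nonneg edge_term_nonneg)

lemma psi_decomp: "psi E d p = psi_i E d i p + Rr i p"
proof -
  have fin: "finite E" by simp
  have "(\<Sum>e\<in>E. edge_term d p e) = (\<Sum>e\<in>{e\<in>E. i \<in> e}. edge_term d p e) + (\<Sum>e\<in>{e\<in>E. i \<notin> e}. edge_term d p e)"
  proof -
    have "(\<Sum>e\<in>E. edge_term d p e) = (\<Sum>e\<in>{e\<in>E. i \<in> e} \<union> {e\<in>E. i \<notin> e}. edge_term d p e)"
      by (rule sum.cong) auto
    also have "\<dots> = (\<Sum>e\<in>{e\<in>E. i \<in> e}. edge_term d p e) + (\<Sum>e\<in>{e\<in>E. i \<notin> e}. edge_term d p e)"
      by (rule sum.union_disjoint) auto
    finally show ?thesis .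
  qed
  moreover have "(\<Sum>e\<in>{e\<in>E. i \<in> e}. edge_term d p e) = (\<Sum>j\<in>fJ i. ((norm (p$j - p$i))\<^sup>2 - (d {i, j})\<^sup>2)\<^sup>2)"
  proof -
    have inj: "inj_on (\<lambda>j. {i, j}) (fJ i)"
      by (rule inj_onI) (use fJ_ne in \<open>auto simp: doubleton_eq_iff\<close>)
    have img: "(\<lambda>j. {i, j}) ` fJ i = {e\<in>E. i \<in> e}"
    proof
      show "(\<lambda>j. {i, j}) ` fJ i \<subseteq> {e \<in> E. i \<in> e}" unfolding fJ_def by auto
    next
      show "{e \<in> E. i \<in> e} \<subseteq> (\<lambda>j. {i, j}) ` fJ i"
      proof
        fix e assume e: "e \<in> {e \<in> E. i \<in> e}"
        then obtain a c where ac: "a \<noteq> c" "e = {a, c}" using edge_pair E_edges by blast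
        then have "e = {i, if a = i then c else a}" using e by auto
        then show "e \<in> (\<lambda>j. {i, j}) ` fJ i" using e unfolding fJ_def by auto
      qed
    qed
    have "(\<Sum>e\<in>{e\<in>E. i \<in> e}. edge_term d p e) = (\<Sum>j\<in>fJ i. edge_term d p {i, j})"
      by (subst img[symmetric], rule sum.reindex[OF inj, unfolded o_def])
    also have "\<dots> = (\<Sum>j\<in>fJ i. ((norm (p$j - p$i))\<^sup>2 - (d {i, j})\<^sup>2)\<^sup>2)"
      by (rule sum.cong) (auto dest: fJ_ne simp: edge_term_pair)
    finally show ?thesis .
  qed
  ultimately show ?thesis unfolding psi_def psi_i_def Rr_def fJ_def by (simp add: algebra_simps)
qed

lemma psi_i_le: "psi_i E d i p \<le> psi E d p"
  using psi_decomp[of p i] Rr_nonneg[of i p] by simp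

lemma psi_fun: "psi E d = (\<lambda>p. psi_i E d i p + Rr i p)"
  using psi_decomp by auto

lemma psi_poly: "polyE E (psi E d :: real^'n::finite^'v \<Rightarrow> real)"
  unfolding psi_fun[of undefined] by (intro polyE.add sos_polyE[OF psi_sos] Rr_poly)

end



context gsetup
begin

lemma Rr_shift:
  fixes p :: "real^'n::finite^'v"
  shows "Rr i (p + t *\<^sub>R Bfield b i k) = Rr i p"
proof -
  have "edge_term d (p + t *\<^sub>R Bfield b i k) e = edge_term d p e" if e: "e \<in> E" "i \<notin> e" for e
  proof -
    obtain a c where ac: "a \<noteq> c" "e = {a, c}" using edge_pair E_edges e by blast
    have "a \<noteq> i" "c \<noteq> i" using e ac by auto
    then have eqs: "(p + t *\<^sub>R Bfield b i k) $ a = p $ a" "(p + t *\<^sub>R Bfield b i k) $ c = p $ c"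
      by (auto simp: Bfield_def)
    show ?thesis by (simp only: ac(2) edge_term_pair[OF ac(1)] eqs)
  qed
  then show ?thesis unfolding Rr_def by (intro arg_cong[where f="\<lambda>x. 1/4 * x"] sum.cong) auto
qed

lemma Dd_Rr: "Dd (Rr i) (Bfield b i k) (p :: real^'n::finite^'v) = 0"
proof -
  let ?B = "Bfield b i k"
  have inner: "((\<lambda>t::real. p + t *\<^sub>R ?B) has_derivative (\<lambda>t. t *\<^sub>R ?B)) (at 0)"
    by (intro derivative_eq_intros) auto
  have outer: "(Rr i has_derivative (\<lambda>v. Dd (Rr i) v p)) (at (p + 0 *\<^sub>R ?B))"
    using polyE_has_deriv[OF Rr_poly, of i p] by simp
  have 1: "((\<lambda>t. Rr i (p + t *\<^sub>R ?B)) has_derivative (\<lambda>t. Dd (Rr i) (t *\<^sub>R ?B) p)) (at 0)"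
    by (rule has_derivative_compose[OF inner outer])
  have 2: "((\<lambda>t. Rr i (p + t *\<^sub>R ?B)) has_derivative (\<lambda>t. 0)) (at (0::real))"
    unfolding Rr_shift by simp
  have "(\<lambda>t. Dd (Rr i) (t *\<^sub>R ?B) p) = (\<lambda>t. 0)" by (rule has_derivative_unique[OF 1 2])
  then have "Dd (Rr i) (1 *\<^sub>R ?B) p = 0" by metis
  then show ?thesis by simp
qed

lemma Dd_psi_B: "Dd (psi E d) (Bfield b i k) (p :: real^'n::finite^'v) = Dd (psi_i E d i) (Bfield b i k) p"
  unfolding psi_fun[of i] by (simp add: Dd_add[OF sos_polyE[OF psi_sos] Rr_poly] Dd_Rr)

lemma psi_nonneg: "psi E d p \<ge> 0"
  unfolding psi_def by (auto intro: sum_nonneg edge_term_nonneg)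

definition M0 :: "real \<Rightarrow> real" where "M0 r = sqrt ((\<Sum>e\<in>E. (d e)\<^sup>2) + 2 * sqrt r)"

lemma region: "r \<ge> 0 \<Longrightarrow> psi E d p \<le> r \<Longrightarrow> p \<in> RM E (M0 r)"
  unfolding RM_def
proof (intro CollectI allI impI)
  fix i j assume r: "r \<ge> 0" and pr: "psi E d p \<le> r" and ij: "{i, j} \<in> E"
  have ne: "i \<noteq> j" using E_edges ij by force
  let ?x = "(norm (p$j - p$i))\<^sup>2 - (d {i, j})\<^sup>2"
  have "edge_term d p {i, j} \<le> (\<Sum>e\<in>E. edge_term d p e)"
    by (rule member_le_sum[OF ij]) (auto intro: edge_term_nonneg)
  then have "?x\<^sup>2 \<le> 4 * r" using pr ne unfolding psi_def by (simp add: edge_term_pair)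
  then have "sqrt (?x\<^sup>2) \<le> sqrt (4 * r)" by (rule real_sqrt_le_mono)
  then have "\<bar>?x\<bar> \<le> 2 * sqrt r" by (simp add: real_sqrt_mult)
  moreover have "(d {i, j})\<^sup>2 \<le> (\<Sum>e\<in>E. (d e)\<^sup>2)"
    by (rule member_le_sum[OF ij, of "\<lambda>e. (d e)\<^sup>2"]) auto
  ultimately have "(norm (p$j - p$i))\<^sup>2 \<le> (\<Sum>e\<in>E. (d e)\<^sup>2) + 2 * sqrt r" by linarith
  then show "norm (p$j - p$i) \<le> M0 r" unfolding M0_def by (rule real_le_rsqrt)
qed

end



locale mainloc = gsetup E d for E :: "'v::finite set set" and d +
  fixes b :: "'v \<Rightarrow> 'n::finite \<Rightarrow> real^'n" and h :: "nat \<Rightarrow> real \<Rightarrow> real"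
  assumes hadm: "admissible_h (h 1)" "admissible_h (h 2)"
begin

lemma inst: "\<nu> \<in> {1,2} \<Longrightarrow> admsosA (h \<nu>) E (fJ i) (ff i) (psi_i E d i) (Dd (psi_i E d i) (Bfield b i k))"
proof -
  assume nu: "\<nu> \<in> {1,2}"
  have "admissible_h (h \<nu>)" using nu hadm by auto
  then show ?thesis
    by (intro admsosA.intro admsos.intro admsos_axioms.intro admsosA_axioms.intro adm.intro
        psi_sos sos_Dd_linf[OF psi_sos])
qed

definition S0 :: "real \<Rightarrow> (real^'n^'v) set" where "S0 r = {p. psi E d p \<le> r}"

lemma S0_RM: "r > 0 \<Longrightarrow> S0 r \<subseteq> RM E (M0 r)"
proof
  fix p assume "r > 0" "p \<in> S0 r"
  then show "p \<in> RM E (M0 r)" unfolding S0_def by (intro region) auto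
qed

lemma S0_phi: "p \<in> S0 r \<Longrightarrow> psi_i E d i p \<le> r"
  unfolding S0_def using psi_i_le[of i p] by auto

lemma to_psi: "bnd (S0 r) (psi_i E d i) f \<Longrightarrow> bnd (S0 r) (psi E d) f"
  by (rule bnd_mono[where c=1]) (auto simp: psi_i_le psi_nonneg)

lemma to_psi_sqrt: "bnd (S0 r) (\<lambda>p. sqrt (psi_i E d i p)) f \<Longrightarrow> bnd (S0 r) (\<lambda>p. sqrt (psi E d p)) f"
  by (rule bnd_mono[where c=1]) (auto simp: psi_i_le psi_nonneg)

lemma to_psi_32: "bnd (S0 r) (\<lambda>p. psi_i E d i p * sqrt (psi_i E d i p)) f \<Longrightarrow> bnd (S0 r) (\<lambda>p. psi E d p * sqrt (psi E d p)) f"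
proof (rule bnd_mono[where c=1])
  fix p
  have "psi_i E d i p * sqrt (psi_i E d i p) \<le> psi E d p * sqrt (psi E d p)"
    using psi_i_le[of i p] sos_nonneg[OF psi_sos, of i p] by (intro mult_mono) auto
  then show "psi_i E d i p * sqrt (psi_i E d i p) \<le> 1 * (psi E d p * sqrt (psi E d p))" by simp
qed (auto simp: psi_nonneg)

lemma bnd_const: "bnd S (\<lambda>p. 1) (\<lambda>p. c)"
  by (rule bndI[where C="\<bar>c\<bar>"]) auto

lemma Xf: "Xfield E d b h (i, k, \<nu>) = (\<lambda>p. h \<nu> (psi_i E d i p) *\<^sub>R Bfield b i k)"
  by (simp add: Xfield_def fun_eq_iff)

lemma powr32: "x \<ge> 0 \<Longrightarrow> x powr (3/2) = x * sqrt x"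
proof -
  assume x: "x \<ge> 0"
  show ?thesis
  proof (cases "x = 0")
    case False
    then have "x powr (3/2) = x powr (1 + 1/2)" by simp
    also have "\<dots> = x powr 1 * x powr (1/2)" using False x by (simp only: powr_add)
    also have "\<dots> = x * sqrt x" using x by (simp add: powr_half_sqrt)
    finally show ?thesis .
  qed simp
qed

lemma powr52: "x \<ge> 0 \<Longrightarrow> x powr (5/2) = x\<^sup>2 * sqrt x"
proof -
  assume x: "x \<ge> 0"
  show ?thesis
  proof (cases "x = 0")
    case False
    then have "x powr (5/2) = x powr (2 + 1/2)" by simp
    also have "\<dots> = x powr 2 * x powr (1/2)" using False x by (simp only: powr_add)
    also have "\<dots> = x\<^sup>2 * sqrt x" using x False by (simp add: powr_half_sqrt powr_realpow)
    finally show ?thesis .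
  qed simp
qed

lemma part_a1:
  assumes n1: "n1 \<in> {1,2}" and r: "r > 0"
  shows "C1 (Xfield E d b h (i1, k1, n1)) \<and>
    (\<exists>c>0. \<forall>p. psi E d p \<le> r \<longrightarrow> norm (Xfield E d b h (i1, k1, n1) p) \<le> c * psi E d p)"
proof -
  interpret I1: admsosA "h n1" E "fJ i1" "ff i1" "psi_i E d i1" "Dd (psi_i E d i1) (Bfield b i1 k1)"
    by (rule inst[OF n1])
  have c1: "C1 (Xfield E d b h (i1, k1, n1))"
    unfolding Xf
  proof (rule C1I)
    fix x :: "real^'n^'v" show "((\<lambda>p. h n1 (psi_i E d i1 p) *\<^sub>R Bfield b i1 k1) has_derivative
      (\<lambda>v. (H1 (h n1) (psi_i E d i1 x) * Dd (psi_i E d i1) v x) *\<^sub>R Bfield b i1 k1)) (at x)"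
      by (rule has_derivative_scaleR_left[OF I1.U0])
  next
    fix e :: "real^'n^'v"
    have "isCont (\<lambda>x. (H1 (h n1) (psi_i E d i1 x) * Dd (psi_i E d i1) e x) *\<^sub>R Bfield b i1 k1) x" for x
      by (intro isCont_scaleR continuous_const I1.H1w_cont polyE_isCont[OF polyE_Dd[OF I1.phiP]] I1.Dphi_zero)
    then show "continuous_on UNIV (\<lambda>x. (H1 (h n1) (psi_i E d i1 x) * Dd (psi_i E d i1) e x) *\<^sub>R Bfield b i1 k1)"
      by (simp add: continuous_on_eq_continuous_at)
  qed
  have "bnd (S0 r) (\<lambda>p. psi E d p * 1) (\<lambda>p. h n1 (psi_i E d i1 p) * norm (Bfield b i1 k1))"
    by (intro bnd_mult bnd_const to_psi[of r i1] I1.b_u[OF S0_RM[OF r] S0_phi[of _ r]])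
  from bnd_final[OF this] obtain c where "c > 0"
    "\<forall>p. p \<in> S0 r \<longrightarrow> \<bar>h n1 (psi_i E d i1 p) * norm (Bfield b i1 k1)\<bar> \<le> c * (psi E d p * 1)" by blast
  then show ?thesis using c1 unfolding Xf S0_def by (auto simp: abs_mult)
qed

lemma X_deriv:
  assumes n1: "n1 \<in> {1,2}"
  shows "(Xfield E d b h (i1, k1, n1) has_derivative
      (\<lambda>v. (H1 (h n1) (psi_i E d i1 p) * Dd (psi_i E d i1) v p) *\<^sub>R Bfield b i1 k1)) (at p)"
proof -
  interpret I1: admsosA "h n1" E "fJ i1" "ff i1" "psi_i E d i1" "Dd (psi_i E d i1) (Bfield b i1 k1)"
    by (rule inst[OF n1])
  show ?thesis unfolding Xf by (rule has_derivative_scaleR_left[OF I1.U0])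
qed

lemma part_a2:
  assumes n1: "n1 \<in> {1,2}" and n2: "n2 \<in> {1,2}" and r: "r > 0"
  shows "continuous_on UNIV (\<lambda>p. frechet_derivative (Xfield E d b h (i1, k1, n1)) (at p) (Xfield E d b h (i2, k2, n2) p)) \<and>
     (\<exists>c>0. \<forall>p. psi E d p \<le> r \<longrightarrow>
        norm (frechet_derivative (Xfield E d b h (i1, k1, n1)) (at p) (Xfield E d b h (i2, k2, n2) p)) \<le> c * psi E d p powr (3/2))"
proof -
  interpret I1: admsosA "h n1" E "fJ i1" "ff i1" "psi_i E d i1" "Dd (psi_i E d i1) (Bfield b i1 k1)"
    by (rule inst[OF n1])
  interpret I2: admsosA "h n2" E "fJ i2" "ff i2" "psi_i E d i2" "Dd (psi_i E d i2) (Bfield b i2 k2)"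
    by (rule inst[OF n2])
  have fd: "frechet_derivative (Xfield E d b h (i1, k1, n1)) (at p) (Xfield E d b h (i2, k2, n2) p)
     = (h n2 (psi_i E d i2 p) * (H1 (h n1) (psi_i E d i1 p) * Dd (psi_i E d i1) (Bfield b i2 k2) p)) *\<^sub>R Bfield b i1 k1" for p
  proof -
    have "frechet_derivative (Xfield E d b h (i1, k1, n1)) (at p) =
      (\<lambda>v. (H1 (h n1) (psi_i E d i1 p) * Dd (psi_i E d i1) v p) *\<^sub>R Bfield b i1 k1)"
      by (rule frechet_derivative_at[OF X_deriv[OF n1], symmetric])
    then show ?thesis by (simp add: Xf Dd_linear[OF I1.phiP])
  qed
  have "isCont (\<lambda>p. (h n2 (psi_i E d i2 p) * (H1 (h n1) (psi_i E d i1 p) * Dd (psi_i E d i1) (Bfield b i2 k2) p)) *\<^sub>R Bfield b i1 k1) p" for p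
    by (intro isCont_scaleR continuous_const isCont_mult I2.U_cont I1.H1w_cont polyE_isCont[OF polyE_Dd[OF I1.phiP]] I1.Dphi_zero)
  then have cont: "continuous_on UNIV (\<lambda>p. frechet_derivative (Xfield E d b h (i1, k1, n1)) (at p) (Xfield E d b h (i2, k2, n2) p))"
    unfolding fd by (simp add: continuous_on_eq_continuous_at)
  have "bnd (S0 r) (\<lambda>p. (psi E d p * sqrt (psi E d p)) * 1)
     (\<lambda>p. (h n2 (psi_i E d i2 p) * (H1 (h n1) (psi_i E d i1 p) * Dd (psi_i E d i1) (Bfield b i2 k2) p)) * norm (Bfield b i1 k1))"
    by (intro bnd_mult bnd_const to_psi[of r i2] to_psi_sqrt[of r i1] I2.b_u[OF S0_RM[OF r] S0_phi[of _ r]]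
        I1.b_H1D[OF S0_RM[OF r] S0_phi[of _ r]])
  from bnd_final[OF this] obtain c where "c > 0"
    "\<forall>p. p \<in> S0 r \<longrightarrow> \<bar>(h n2 (psi_i E d i2 p) * (H1 (h n1) (psi_i E d i1 p) * Dd (psi_i E d i1) (Bfield b i2 k2) p)) * norm (Bfield b i1 k1)\<bar>
        \<le> c * (psi E d p * sqrt (psi E d p) * 1)" by blast
  then show ?thesis using cont unfolding fd S0_def by (auto simp: abs_mult powr32 psi_nonneg)
qed

lemma lie1:
  assumes n1: "n1 \<in> {1,2}"
  shows "lie (Xfield E d b h (i1, k1, n1)) (psi E d) = (\<lambda>p. h n1 (psi_i E d i1 p) * Dd (psi_i E d i1) (Bfield b i1 k1) p)"
proof
  fix p :: "real^'n^'v"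
  have "frechet_derivative (psi E d) (at p) = (\<lambda>v. Dd (psi E d) v p)"
    by (rule frechet_derivative_at[OF polyE_has_deriv[OF psi_poly], symmetric])
  then show "lie (Xfield E d b h (i1, k1, n1)) (psi E d) p = h n1 (psi_i E d i1 p) * Dd (psi_i E d i1) (Bfield b i1 k1) p"
    by (simp add: lie_def Xf Dd_linear[OF psi_poly] Dd_psi_B)
qed

lemma part_b1:
  assumes n1: "n1 \<in> {1,2}" and r: "r > 0"
  shows "C2 (lie (Xfield E d b h (i1, k1, n1)) (psi E d)) \<and>
     (\<exists>c>0. \<forall>p. psi E d p \<le> r \<longrightarrow> \<bar>lie (Xfield E d b h (i1, k1, n1)) (psi E d) p\<bar> \<le> c * psi E d p powr (3/2))"
proof -
  interpret I1: admsosA "h n1" E "fJ i1" "ff i1" "psi_i E d i1" "Dd (psi_i E d i1) (Bfield b i1 k1)"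
    by (rule inst[OF n1])
  have c2: "C2 (\<lambda>p. h n1 (psi_i E d i1 p) * Dd (psi_i E d i1) (Bfield b i1 k1) p)"
  proof (rule C2I)
    fix x :: "real^'n^'v"
    show "((\<lambda>p. h n1 (psi_i E d i1 p) * Dd (psi_i E d i1) (Bfield b i1 k1) p) has_derivative (\<lambda>v. I1.DF1 v x)) (at x)"
      by (rule I1.F1_deriv)
  next
    fix i :: "real^'n^'v" and x
    show "((\<lambda>x. I1.DF1 i x) has_derivative (\<lambda>w. I1.DDF1 i w x)) (at x)" by (rule I1.DF1_deriv)
  next
    fix i j :: "real^'n^'v"
    show "continuous_on UNIV (\<lambda>x. I1.DDF1 i j x)"
      using I1.DDF1_cont by (simp add: continuous_on_eq_continuous_at)
  qed
  have "bnd (S0 r) (\<lambda>p. psi E d p * sqrt (psi E d p)) (\<lambda>p. h n1 (psi_i E d i1 p) * Dd (psi_i E d i1) (Bfield b i1 k1) p)"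
    by (intro to_psi_32[of r i1] I1.b_F1[OF S0_RM[OF r] S0_phi[of _ r]])
  from bnd_final[OF this] obtain c where "c > 0"
    "\<forall>p. p \<in> S0 r \<longrightarrow> \<bar>h n1 (psi_i E d i1 p) * Dd (psi_i E d i1) (Bfield b i1 k1) p\<bar> \<le> c * (psi E d p * sqrt (psi E d p))" by blast
  then show ?thesis using c2 unfolding lie1[OF n1] S0_def by (auto simp: powr32 psi_nonneg)
qed

lemma part_b23:
  assumes n1: "n1 \<in> {1,2}" and n2: "n2 \<in> {1,2}" and n3: "n3 \<in> {1,2}" and r: "r > 0"
  shows "C1 (lie (Xfield E d b h (i2, k2, n2)) (lie (Xfield E d b h (i1, k1, n1)) (psi E d))) \<and>
     (\<exists>c>0. \<forall>p. psi E d p \<le> r \<longrightarrow> \<bar>lie (Xfield E d b h (i2, k2, n2)) (lie (Xfield E d b h (i1, k1, n1)) (psi E d)) p\<bar> \<le> c * psi E d p ^ 2) \<and>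
    continuous_on UNIV (lie (Xfield E d b h (i3, k3, n3)) (lie (Xfield E d b h (i2, k2, n2)) (lie (Xfield E d b h (i1, k1, n1)) (psi E d)))) \<and>
     (\<exists>c>0. \<forall>p. psi E d p \<le> r \<longrightarrow>
        \<bar>lie (Xfield E d b h (i3, k3, n3)) (lie (Xfield E d b h (i2, k2, n2)) (lie (Xfield E d b h (i1, k1, n1)) (psi E d))) p\<bar> \<le> c * psi E d p powr (5/2))"
proof -
  interpret I1: admsosA "h n1" E "fJ i1" "ff i1" "psi_i E d i1" "Dd (psi_i E d i1) (Bfield b i1 k1)"
    by (rule inst[OF n1])
  interpret I2: admsosA "h n2" E "fJ i2" "ff i2" "psi_i E d i2" "Dd (psi_i E d i2) (Bfield b i2 k2)"
    by (rule inst[OF n2])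
  interpret I3: admsosA "h n3" E "fJ i3" "ff i3" "psi_i E d i3" "Dd (psi_i E d i3) (Bfield b i3 k3)"
    by (rule inst[OF n3])
  let ?B2 = "Bfield b i2 k2" and ?B3 = "Bfield b i3 k3"
  let ?F2 = "\<lambda>p. h n2 (psi_i E d i2 p) * I1.DF1 ?B2 p"
  let ?DF2 = "\<lambda>v p. h n2 (psi_i E d i2 p) * I1.DDF1 ?B2 v p + H1 (h n2) (psi_i E d i2 p) * Dd (psi_i E d i2) v p * I1.DF1 ?B2 p"
  have L2: "lie (Xfield E d b h (i2, k2, n2)) (lie (Xfield E d b h (i1, k1, n1)) (psi E d)) = ?F2"
  proof
    fix p :: "real^'n^'v"
    have "frechet_derivative (\<lambda>p. h n1 (psi_i E d i1 p) * Dd (psi_i E d i1) (Bfield b i1 k1) p) (at p) = (\<lambda>v. I1.DF1 v p)"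
      by (rule frechet_derivative_at[OF I1.F1_deriv, symmetric])
    then show "lie (Xfield E d b h (i2, k2, n2)) (lie (Xfield E d b h (i1, k1, n1)) (psi E d)) p = ?F2 p"
      unfolding lie1[OF n1] by (simp add: lie_def Xf I1.DF1_linear)
  qed
  have F2d: "(?F2 has_derivative (\<lambda>v. ?DF2 v p)) (at p)" for p
    using has_derivative_mult[OF I2.U0 I1.DF1_deriv] by simp
  have DF2c: "isCont (?DF2 v) p" for v p
    by (intro isCont_add isCont_mult I2.U_cont I1.DDF1_cont I1.DF1_cont I2.H1w_cont
        polyE_isCont[OF polyE_Dd[OF I2.phiP]] I2.Dphi_zero)
  have c1: "C1 ?F2"
    by (rule C1I[OF F2d]) (use DF2c in \<open>simp add: continuous_on_eq_continuous_at\<close>)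
  have "bnd (S0 r) (\<lambda>p. psi E d p * psi E d p) ?F2"
    by (intro bnd_mult to_psi[of r i2] to_psi[of r i1] I2.b_u[OF S0_RM[OF r] S0_phi[of _ r]]
        I1.b_DF1[OF S0_RM[OF r] S0_phi[of _ r]])
  from bnd_final[OF this] obtain c where "c > 0"
    "\<forall>p. p \<in> S0 r \<longrightarrow> \<bar>?F2 p\<bar> \<le> c * (psi E d p * psi E d p)" by blast
  then have b2: "\<exists>c>0. \<forall>p. psi E d p \<le> r \<longrightarrow> \<bar>?F2 p\<bar> \<le> c * psi E d p ^ 2"
    unfolding S0_def by (auto simp: power2_eq_square)
  let ?F3 = "\<lambda>p. h n3 (psi_i E d i3 p) * ?DF2 ?B3 p"
  have L3: "lie (Xfield E d b h (i3, k3, n3)) ?F2 = ?F3"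
  proof
    fix p :: "real^'n^'v"
    have fd: "frechet_derivative ?F2 (at p) = (\<lambda>v. ?DF2 v p)"
      by (rule frechet_derivative_at[OF F2d, symmetric])
    have lin: "I1.DDF1 ?B2 (c *\<^sub>R v) p = c * I1.DDF1 ?B2 v p" for c v
      using linear_cmul[OF has_derivative_linear[OF I1.DF1_deriv[of ?B2 p]]] by simp
    show "lie (Xfield E d b h (i3, k3, n3)) ?F2 p = ?F3 p"
      unfolding lie_def fd by (simp add: Xf lin Dd_linear[OF I2.phiP] algebra_simps)
  qed
  have c3: "continuous_on UNIV ?F3"
    using DF2c I3.U_cont by (simp add: continuous_on_eq_continuous_at isCont_mult)
  have t1: "bnd (S0 r) (\<lambda>p. psi E d p * sqrt (psi E d p)) (\<lambda>p. h n2 (psi_i E d i2 p) * I1.DDF1 ?B2 ?B3 p)"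
    by (intro bnd_mult to_psi[of r i2] to_psi_sqrt[of r i1] I2.b_u[OF S0_RM[OF r] S0_phi[of _ r]]
        I1.b_DDF1[OF S0_RM[OF r] S0_phi[of _ r]])
  have t2: "bnd (S0 r) (\<lambda>p. sqrt (psi E d p) * psi E d p) (\<lambda>p. H1 (h n2) (psi_i E d i2 p) * Dd (psi_i E d i2) ?B3 p * I1.DF1 ?B2 p)"
    by (intro bnd_mult to_psi_sqrt[of r i2] to_psi[of r i1] I2.b_H1D[OF S0_RM[OF r] S0_phi[of _ r]]
        I1.b_DF1[OF S0_RM[OF r] S0_phi[of _ r]])
  have t2': "bnd (S0 r) (\<lambda>p. psi E d p * sqrt (psi E d p)) (\<lambda>p. H1 (h n2) (psi_i E d i2 p) * Dd (psi_i E d i2) ?B3 p * I1.DF1 ?B2 p)"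
    by (rule bnd_mono[OF t2, where c=1]) (auto simp: psi_nonneg)
  have "bnd (S0 r) (\<lambda>p. psi E d p * (psi E d p * sqrt (psi E d p))) ?F3"
    by (intro bnd_mult bnd_add t1 t2' to_psi[of r i3] I3.b_u[OF S0_RM[OF r] S0_phi[of _ r]])
  from bnd_final[OF this] obtain c where "c > 0"
    "\<forall>p. p \<in> S0 r \<longrightarrow> \<bar>?F3 p\<bar> \<le> c * (psi E d p * (psi E d p * sqrt (psi E d p)))" by blast
  then have b3: "\<exists>c>0. \<forall>p. psi E d p \<le> r \<longrightarrow> \<bar>?F3 p\<bar> \<le> c * psi E d p powr (5/2)"
    unfolding S0_def by (auto simp: powr52 psi_nonneg power2_eq_square mult.assoc)
  show ?thesis unfolding L2 L3 using c1 b2 c3 b3 by blast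
qed

end


theorem lemma5p2:
  fixes E :: "'v::finite set set"
    and d :: "'v set \<Rightarrow> real"
    and b :: "'v \<Rightarrow> 'n::finite \<Rightarrow> real^'n"
    and h :: "nat \<Rightarrow> real \<Rightarrow> real"
    and m1 m2 m3 :: "'v \<times> 'n \<times> nat"
    and r :: real
  assumes E_ne: "E \<noteq> {}"
    and E_edges: "\<forall>e\<in>E. card e = 2"
    and d_nonneg: "\<forall>e\<in>E. d e \<ge> 0"
    and b_orthonormal: "\<forall>i k k'. b i k \<bullet> b i k' = (if k = k' then 1 else 0)"
    and h_adm: "admissible_h (h 1)" "admissible_h (h 2)"
    and h_vi: "\<exists>r' c'. r' > 0 \<and> c' > 0 \<and>
        (\<forall>y\<in>{0<..r'}. deriv (h 2) y * h 1 y - deriv (h 1) y * h 2 y \<le> - c' * y)"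
    and m_range: "snd (snd m1) \<in> {1, 2}" "snd (snd m2) \<in> {1, 2}" "snd (snd m3) \<in> {1, 2}"
    and r_pos: "r > 0"
  defines "\<Psi> \<equiv> psi E d"
    and "X \<equiv> Xfield E d b h"
  shows
    \<comment> \<open>(a)(i)\<close>
    "C1 (X m1) \<and> (\<exists>c>0. \<forall>p. \<Psi> p \<le> r \<longrightarrow> norm (X m1 p) \<le> c * \<Psi> p) \<and>
    \<comment> \<open>(a)(ii)\<close>
    continuous_on UNIV (\<lambda>p. frechet_derivative (X m1) (at p) (X m2 p)) \<and>
     (\<exists>c>0. \<forall>p. \<Psi> p \<le> r \<longrightarrow>
        norm (frechet_derivative (X m1) (at p) (X m2 p)) \<le> c * \<Psi> p powr (3/2)) \<and>
    \<comment> \<open>(b)(i)\<close>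
    C2 (lie (X m1) \<Psi>) \<and>
     (\<exists>c>0. \<forall>p. \<Psi> p \<le> r \<longrightarrow> \<bar>lie (X m1) \<Psi> p\<bar> \<le> c * \<Psi> p powr (3/2)) \<and>
    \<comment> \<open>(b)(ii)\<close>
    C1 (lie (X m2) (lie (X m1) \<Psi>)) \<and>
     (\<exists>c>0. \<forall>p. \<Psi> p \<le> r \<longrightarrow> \<bar>lie (X m2) (lie (X m1) \<Psi>) p\<bar> \<le> c * \<Psi> p ^ 2) \<and>
    \<comment> \<open>(b)(iii)\<close>
    continuous_on UNIV (lie (X m3) (lie (X m2) (lie (X m1) \<Psi>))) \<and>
     (\<exists>c>0. \<forall>p. \<Psi> p \<le> r \<longrightarrow>
        \<bar>lie (X m3) (lie (X m2) (lie (X m1) \<Psi>)) p\<bar> \<le> c * \<Psi> p powr (5/2))"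
  proof -
  obtain i1 k1 n1 where m1: "m1 = (i1, k1, n1)" by (cases m1) auto
  obtain i2 k2 n2 where m2: "m2 = (i2, k2, n2)" by (cases m2) auto
  obtain i3 k3 n3 where m3: "m3 = (i3, k3, n3)" by (cases m3) auto
  have n1: "n1 \<in> {1,2}" and n2: "n2 \<in> {1,2}" and n3: "n3 \<in> {1,2}"
    using m_range m1 m2 m3 by auto
  interpret M: mainloc E d b h
    by (intro mainloc.intro gsetup.intro mainloc_axioms.intro E_edges h_adm)
  have eqs: "\<Psi> = psi E d" "X = Xfield E d b h" using assms by simp_all
  show ?thesis
    unfolding eqs m1 m2 m3
    using M.part_a1[OF n1 r_pos, of i1 k1] M.part_a2[OF n1 n2 r_pos, of i1 k1 i2 k2]
      M.part_b1[OF n1 r_pos, of i1 k1] M.part_b23[OF n1 n2 n3 r_pos, of i2 k2 i1 k1 i3 k3]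
    by blast
qed

end
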